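(* Suppose Assumption A holds and $g_k$ satisfies Condition C. Consider the Algorithm with Option I (so $y_k=x_k$). (1) (FS): If $\eta_k=\eta\in[0,1)$ for all $k$, $\iota_0\in\left[0,\sqrt{\frac{1-\eta}{2}}\right)$, $\sum_{k=0}^\infty\delta_k^2<\infty$, and $\alpha_k=\alpha\le\frac{1-\eta}{2L}$ for all $k$, then there is a constant $C<\infty$ such that for all $K\ge1$, $\min_{k=0,\dots,K-1}\|R^{true}_{\alpha}(x_k)\|^2\le\frac{C}{K}$. (2) (EX): If $\tilde\eta_k=\tilde\eta\in[0,1)$ for all $k$, $\tilde\iota_0\in\left[0,\sqrt{\frac{1-\tilde\eta}{2}}\right)$, $\sum_{k=0}^\infty\tilde\delta_k^2<\infty$, and $\alpha_k=\alpha\le\frac{1-\tilde\eta}{2L}$ for all $k$, then there is a constant $C<\infty$ such that for all $K\ge1$, $\min_{k=0,\dots,K-1}\mathbb E[\|R^{true}_{\alpha}(x_k)\|^2]\le\frac{C}{K}$.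
   Context: Problem: minimize $\phi(x)=f(x)+h(x)$ over $x\in\mathbb{R}^d$. Assumption A: $f:\mathbb{R}^d\to\mathbb{R}$ is continuously differentiable with $L$-Lipschitz continuous gradient ($L>0$), and $h:\mathbb{R}^d\to\mathbb{R}\cup\{+\infty\}$ is closed, convex and proper; $\phi^*=\inf\phi>-\infty$ ($f$ need not be convex). Two settings: the finite-sum problem (FS), $f(x)=\frac1N\sum_{i=1}^N F(x,\xi_i)$ over a dataset $\mathcal S=\{\xi_1,\dots,\xi_N\}$; and the expectation problem (EX), $f(x)=\mathbb E_{\xi\sim\mathcal P}[F(x,\xi)]$. For $\alpha>0$, $\mathrm{prox}_{\alpha,h}(y)=\arg\min_{x\in\mathbb{R}^d}\{h(x)+\frac{1}{2\alpha}\|x-y\|^2\}$. Algorithm: given $x_0\in\mathbb{R}^d$, $y_0=x_0$, step sizes $\alpha_k>0$ and parameters $\beta_k$, for $k=0,1,2,\dots$: compute an estimate $g_k$ of $\nabla f(y_k)$ (possibly biased, possibly random); set $x_{k+1}=\mathrm{prox}_{\alpha_k,h}(y_k-\alpha_kg_k)$; under Option I set $y_{k+1}=x_{k+1}$, under Option II set $y_{k+1}=x_{k+1}+\beta_{k+1}(x_{k+1}-x_k)$. Define $R_{\alpha_k}(y_k)=\frac{1}{\alpha_k}(y_k-x_{k+1})$, $\hat x_{k+1}=\mathrm{prox}_{\alpha_k,h}(y_k-\alpha_k\nabla f(y_k))$ and $R^{true}_{\alpha_k}(y_k)=\frac{1}{\alpha_k}(y_k-\hat x_{k+1})$. Let $\mathcal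 G_k$ be the $\sigma$-algebra generated by $x_0,g_0,\dots,g_{k-1}$ (so $x_k,y_k$ are $\mathcal G_k$-measurable), $\mathbb E_k[\cdot]=\mathbb E[\cdot\mid\mathcal G_k]$, and $\mathbb E[\cdot]$ is total expectation. Condition C, required for all $k\ge0$: in (FS), $\|g_k-\nabla f(y_k)\|\le\frac{\eta_k}{2}\|R_{\alpha_k}(y_k)\|+\iota_0\delta_k$ with $\eta_k\in[0,1)$, $\iota_0\ge0$, $\delta_k\ge0$; in (EX), $\mathbb E_k[\|g_k-\nabla f(y_k)\|^2]\le\frac{\tilde\eta_k^2}{4}\|\mathbb E_k[R_{\alpha_k}(y_k)]\|^2+\tilde\iota_0^2\tilde\delta_k^2$ with $\tilde\eta_k\in[0,1)$, $\tilde\iota_0\ge0$, $\tilde\delta_k\ge0$. *)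

theory Defs
  imports "HOL-Analysis.Analysis" "HOL-Probability.Probability"
begin

definition epigraph :: "('a \<Rightarrow> ereal) \<Rightarrow> ('a \<times> real) set" where
  "epigraph h = {(x, t). h x \<le> ereal t}"

definition closed_convex_proper :: "('a::real_normed_vector \<Rightarrow> ereal) \<Rightarrow> bool" where
  "closed_convex_proper h \<longleftrightarrow>
     closed (epigraph h) \<and> convex (epigraph h) \<and>
     (\<forall>x. h x \<noteq> -\<infinity>) \<and> (\<exists>x. h x \<noteq> \<infinity>)"

definition prox :: "real \<Rightarrow> ('a::real_normed_vector \<Rightarrow> ereal) \<Rightarrow> 'a \<Rightarrow> 'a" where
  "prox \<alpha> h y = (THE x. \<forall>z. h x + ereal (norm (x - y)^2 / (2 * \<alpha>))
                              \<le> h z + ereal (norm (z - y)^2 / (2 * \<alpha>)))"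

definition Rtrue :: "real \<Rightarrow> ('a::real_normed_vector \<Rightarrow> ereal) \<Rightarrow> ('a \<Rightarrow> 'a) \<Rightarrow> 'a \<Rightarrow> 'a" where
  "Rtrue \<alpha> h gradf y = (1 / \<alpha>) *\<^sub>R (y - prox \<alpha> h (y - \<alpha> *\<^sub>R gradf y))"

definition assumptionA ::
  "('a::euclidean_space \<Rightarrow> real) \<Rightarrow> ('a \<Rightarrow> 'a) \<Rightarrow> ('a \<Rightarrow> ereal) \<Rightarrow> real \<Rightarrow> bool" where
  "assumptionA f gradf h L \<longleftrightarrow>
     L > 0 \<and>
     (\<forall>x. (f has_derivative (\<lambda>v. gradf x \<bullet> v)) (at x)) \<and>
     continuous_on UNIV gradf \<and>
     (\<forall>x y. norm (gradf x - gradf y) \<le> L * norm (x - y)) \<and>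
     closed_convex_proper h \<and>
     (\<exists>m::real. \<forall>x. ereal m \<le> ereal (f x) + h x)"

text \<open>G_k: sigma-algebra generated by (the constant x_0 and) g_0, ..., g_{k-1}.\<close>
definition gen_sigma :: "'w measure \<Rightarrow> (nat \<Rightarrow> 'w \<Rightarrow> 'a::topological_space) \<Rightarrow> nat \<Rightarrow> 'w measure" where
  "gen_sigma M g k = sigma (space M) {g j -` A \<inter> space M | j A. j < k \<and> A \<in> sets borel}"

definition vec_cond_exp :: "'w measure \<Rightarrow> 'w measure \<Rightarrow> ('w \<Rightarrow> 'a::euclidean_space) \<Rightarrow> 'w \<Rightarrow> 'a" where
  "vec_cond_exp M F X \<omega> = (\<Sum>b\<in>Basis. real_cond_exp M F (\<lambda>\<omega>. X \<omega> \<bullet> b) \<omega> *\<^sub>R b)"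

end

theory Submission
  imports Defs
begin


lemma scalar_jensen:
  assumes P: "prob_space M" and S: "sigma_finite_subalgebra M F" and X: "integrable M X"
  shows "AE \<omega> in M. ennreal ((real_cond_exp M F X \<omega>)\<^sup>2) \<le> nn_cond_exp M F (\<lambda>\<omega>. ennreal ((X \<omega>)\<^sup>2)) \<omega>"
proof -
  interpret S: sigma_finite_subalgebra M F by fact
  interpret P: prob_space M by fact
  define Y where "Y = real_cond_exp M F X"
  have XM[measurable]: "X \<in> borel_measurable M" using X by auto
  have YF[measurable]: "Y \<in> borel_measurable F" unfolding Y_def by simp
  have key: "AE \<omega> in M. \<bar>Y \<omega>\<bar> \<le> real n \<longrightarrow> ennreal ((Y \<omega>)\<^sup>2) \<le> nn_cond_exp M F (\<lambda>\<omega>. ennreal ((X \<omega>)\<^sup>2)) \<omega>"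
    for n :: nat
  proof -
    define c where "c = (\<lambda>\<omega>. max (- real n) (min (real n) (Y \<omega>)))"
    have cF[measurable]: "c \<in> borel_measurable F" unfolding c_def by measurable
    have cM[measurable]: "c \<in> borel_measurable M" using measurable_from_subalg[OF S.subalg cF] .
    have cb: "\<bar>c \<omega>\<bar> \<le> real n" for \<omega> unfolding c_def by auto
    have cF2[measurable]: "(\<lambda>\<omega>. 2 * c \<omega>) \<in> borel_measurable F" by measurable
    have cF3[measurable]: "(\<lambda>\<omega>. (c \<omega>)\<^sup>2) \<in> borel_measurable F" by measurable
    have i1: "integrable M (\<lambda>\<omega>. (2 * c \<omega>) * X \<omega>)"
    proof (rule Bochner_Integration.integrable_bound[where f = "\<lambda>\<omega>. (2 * real n) * X \<omega>"])
      show "integrable M (\<lambda>\<omega>. (2 * real n) * X \<omega>)" using X by simp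
      show "(\<lambda>\<omega>. (2 * c \<omega>) * X \<omega>) \<in> borel_measurable M" by measurable
      show "AE \<omega> in M. norm (2 * c \<omega> * X \<omega>) \<le> norm (2 * real n * X \<omega>)"
        using cb by (auto simp: abs_mult intro!: mult_right_mono)
    qed
    have i2: "integrable M (\<lambda>\<omega>. (c \<omega>)\<^sup>2)"
    proof (rule P.integrable_const_bound[where B = "(real n)\<^sup>2"])
      show "AE \<omega> in M. norm ((c \<omega>)\<^sup>2) \<le> (real n)\<^sup>2"
      proof (intro AE_I2)
        fix \<omega>
        have "\<bar>c \<omega>\<bar>\<^sup>2 \<le> (real n)\<^sup>2" using power_mono[OF cb[of \<omega>] abs_ge_zero] .
        then show "norm ((c \<omega>)\<^sup>2) \<le> (real n)\<^sup>2" by simp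
      qed
      show "(\<lambda>\<omega>. (c \<omega>)\<^sup>2) \<in> borel_measurable M" by measurable
    qed
    have e1: "AE \<omega> in M. real_cond_exp M F (\<lambda>\<omega>. (2 * c \<omega>) * X \<omega> - (c \<omega>)\<^sup>2) \<omega>
        = real_cond_exp M F (\<lambda>\<omega>. (2 * c \<omega>) * X \<omega>) \<omega> - real_cond_exp M F (\<lambda>\<omega>. (c \<omega>)\<^sup>2) \<omega>"
      by (rule S.real_cond_exp_diff[OF i1 i2])
    have e2: "AE \<omega> in M. real_cond_exp M F (\<lambda>\<omega>. (2 * c \<omega>) * X \<omega>) \<omega> = (2 * c \<omega>) * real_cond_exp M F X \<omega>"
      by (rule S.real_cond_exp_mult[OF cF2 XM i1])
    have e3: "AE \<omega> in M. real_cond_exp M F (\<lambda>\<omega>. (c \<omega>)\<^sup>2) \<omega> = (c \<omega>)\<^sup>2"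
      by (rule S.real_cond_exp_F_meas[OF i2 cF3])
    have e4: "AE \<omega> in M. nn_cond_exp M F (\<lambda>\<omega>. ennreal ((2 * c \<omega>) * X \<omega> - (c \<omega>)\<^sup>2)) \<omega>
        \<le> nn_cond_exp M F (\<lambda>\<omega>. ennreal ((X \<omega>)\<^sup>2)) \<omega>"
    proof (rule S.nn_cond_exp_mono)
      show "AE \<omega> in M. ennreal ((2 * c \<omega>) * X \<omega> - (c \<omega>)\<^sup>2) \<le> ennreal ((X \<omega>)\<^sup>2)"
      proof (intro AE_I2 ennreal_leI)
        fix \<omega>
        have "0 \<le> (X \<omega> - c \<omega>)\<^sup>2" by simp
        then show "(2 * c \<omega>) * X \<omega> - (c \<omega>)\<^sup>2 \<le> (X \<omega>)\<^sup>2" by (simp add: power2_eq_square algebra_simps)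
      qed
    qed measurable
    show ?thesis
      using e1 e2 e3 e4
    proof eventually_elim
      case (elim \<omega>)
      show ?case
      proof
        assume Yn: "\<bar>Y \<omega>\<bar> \<le> real n"
        then have cY: "c \<omega> = Y \<omega>" unfolding c_def by auto
        define Z where "Z = (\<lambda>\<omega>. (2 * c \<omega>) * X \<omega> - (c \<omega>)\<^sup>2)"
        have "real_cond_exp M F Z \<omega> = (Y \<omega>)\<^sup>2"
          using elim(1,2,3) cY unfolding Z_def Y_def by (simp add: power2_eq_square)
        moreover have "real_cond_exp M F Z \<omega> \<le> enn2real (nn_cond_exp M F (\<lambda>\<omega>. ennreal (Z \<omega>)) \<omega>)"
          unfolding real_cond_exp_def by simp
        ultimately have "ennreal ((Y \<omega>)\<^sup>2) \<le> ennreal (enn2real (nn_cond_exp M F (\<lambda>\<omega>. ennreal (Z \<omega>)) \<omega>))"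
          by (intro ennreal_leI) simp
        also have "\<dots> \<le> nn_cond_exp M F (\<lambda>\<omega>. ennreal (Z \<omega>)) \<omega>"
          by (simp add: ennreal_enn2real_if)
        also have "\<dots> \<le> nn_cond_exp M F (\<lambda>\<omega>. ennreal ((X \<omega>)\<^sup>2)) \<omega>" using elim(4) unfolding Z_def .
        finally show "ennreal ((Y \<omega>)\<^sup>2) \<le> nn_cond_exp M F (\<lambda>\<omega>. ennreal ((X \<omega>)\<^sup>2)) \<omega>" .
      qed
    qed
  qed
  have "AE \<omega> in M. \<forall>n::nat. \<bar>Y \<omega>\<bar> \<le> real n \<longrightarrow> ennreal ((Y \<omega>)\<^sup>2) \<le> nn_cond_exp M F (\<lambda>\<omega>. ennreal ((X \<omega>)\<^sup>2)) \<omega>"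
    unfolding AE_all_countable using key by blast
  then show ?thesis
  proof eventually_elim
    case (elim \<omega>)
    have "\<bar>Y \<omega>\<bar> \<le> real (nat \<lceil>\<bar>Y \<omega>\<bar>\<rceil>)" by linarith
    then show ?case using elim unfolding Y_def by blast
  qed
qed


lemma nn_cond_exp_sum_finite:
  assumes S: "sigma_finite_subalgebra M F" and I: "finite I"
    and f: "\<And>i. i \<in> I \<Longrightarrow> f i \<in> borel_measurable M"
  shows "AE \<omega> in M. (\<Sum>i\<in>I. nn_cond_exp M F (f i) \<omega>) = nn_cond_exp M F (\<lambda>\<omega>. \<Sum>i\<in>I. f i \<omega>) \<omega>"
  using I f
proof (induction I rule: finite_induct)
  case empty
  interpret S: sigma_finite_subalgebra M F by fact
  have "AE \<omega> in M. (\<lambda>_. 0::ennreal) \<omega> = nn_cond_exp M F (\<lambda>_. 0) \<omega>"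
    by (rule S.nn_cond_exp_F_meas) simp
  then show ?case by simp
next
  case (insert j I)
  interpret S: sigma_finite_subalgebra M F by fact
  have m1: "f j \<in> borel_measurable M" using insert by simp
  have m2: "(\<lambda>\<omega>. \<Sum>i\<in>I. f i \<omega>) \<in> borel_measurable M" using insert by (intro borel_measurable_sum) auto
  have a1: "AE \<omega> in M. nn_cond_exp M F (f j) \<omega> + nn_cond_exp M F (\<lambda>\<omega>. \<Sum>i\<in>I. f i \<omega>) \<omega>
      = nn_cond_exp M F (\<lambda>\<omega>. f j \<omega> + (\<Sum>i\<in>I. f i \<omega>)) \<omega>"
    by (rule S.nn_cond_exp_sum[OF m1 m2])
  have a2: "AE \<omega> in M. (\<Sum>i\<in>I. nn_cond_exp M F (f i) \<omega>) = nn_cond_exp M F (\<lambda>\<omega>. \<Sum>i\<in>I. f i \<omega>) \<omega>"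
    using insert by simp
  show ?case using a1 a2 by eventually_elim (simp add: insert(1,2))
qed

lemma norm_sq_Basis: "(norm (v::'a::euclidean_space))\<^sup>2 = (\<Sum>b\<in>Basis. (v \<bullet> b)\<^sup>2)"
  unfolding power2_norm_eq_inner by (subst euclidean_inner) (simp add: power2_eq_square)

lemma vec_jensen:
  fixes X :: "'w \<Rightarrow> 'a::euclidean_space"
  assumes P: "prob_space M" and S: "sigma_finite_subalgebra M F" and X: "integrable M X"
  shows "AE \<omega> in M. ennreal ((norm (vec_cond_exp M F X \<omega>))\<^sup>2)
            \<le> nn_cond_exp M F (\<lambda>\<omega>. ennreal ((norm (X \<omega>))\<^sup>2)) \<omega>"
proof -
  have XM[measurable]: "X \<in> borel_measurable M" using X by auto
  have j: "AE \<omega> in M. \<forall>b\<in>Basis. ennreal ((real_cond_exp M F (\<lambda>\<omega>. X \<omega> \<bullet> b) \<omega>)\<^sup>2)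
      \<le> nn_cond_exp M F (\<lambda>\<omega>. ennreal ((X \<omega> \<bullet> b)\<^sup>2)) \<omega>"
    by (intro AE_finite_allI finite_Basis scalar_jensen[OF P S] integrable_inner_left X)
  have s: "AE \<omega> in M. (\<Sum>b\<in>Basis. nn_cond_exp M F (\<lambda>\<omega>. ennreal ((X \<omega> \<bullet> b)\<^sup>2)) \<omega>)
      = nn_cond_exp M F (\<lambda>\<omega>. \<Sum>b\<in>Basis. ennreal ((X \<omega> \<bullet> b)\<^sup>2)) \<omega>"
    by (rule nn_cond_exp_sum_finite[OF S finite_Basis]) measurable
  have fe: "(\<lambda>\<omega>. \<Sum>b\<in>Basis. ennreal ((X \<omega> \<bullet> b)\<^sup>2)) = (\<lambda>\<omega>. ennreal ((norm (X \<omega>))\<^sup>2))"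
    by (rule ext) (simp add: sum_ennreal norm_sq_Basis)
  show ?thesis using j s
  proof eventually_elim
    case (elim \<omega>)
    have vb: "vec_cond_exp M F X \<omega> \<bullet> b = real_cond_exp M F (\<lambda>\<omega>. X \<omega> \<bullet> b) \<omega>" if "b \<in> Basis" for b
      unfolding vec_cond_exp_def using that by (rule inner_sum_left_Basis)
    have "ennreal ((norm (vec_cond_exp M F X \<omega>))\<^sup>2)
        = (\<Sum>b\<in>Basis. ennreal ((real_cond_exp M F (\<lambda>\<omega>. X \<omega> \<bullet> b) \<omega>)\<^sup>2))"
      by (simp add: norm_sq_Basis vb sum_ennreal)
    also have "\<dots> \<le> (\<Sum>b\<in>Basis. nn_cond_exp M F (\<lambda>\<omega>. ennreal ((X \<omega> \<bullet> b)\<^sup>2)) \<omega>)"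
      using elim(1) by (intro sum_mono) auto
    also have "\<dots> = nn_cond_exp M F (\<lambda>\<omega>. ennreal ((norm (X \<omega>))\<^sup>2)) \<omega>"
      using elim(2) fe by simp
    finally show ?case .
  qed
qed


lemma gen_sigma_sub:
  assumes P: "prob_space M" and g: "\<forall>k. g k \<in> borel_measurable M"
  shows "sigma_finite_subalgebra M (gen_sigma M g k)"
proof (rule finite_measure_subalgebra_is_sigma_finite)
  interpret P: prob_space M by fact
  define G where "G = {g j -` A \<inter> space M | j A. j < k \<and> A \<in> sets (borel :: 'b measure)}"
  have GM: "G \<subseteq> sets M" unfolding G_def using g by (auto intro: measurable_sets)
  then have Gp: "G \<subseteq> Pow (space M)" using sets.sets_into_space by blast
  have eq: "gen_sigma M g k = sigma (space M) G" unfolding gen_sigma_def G_def by simp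
  have "subalgebra M (gen_sigma M g k)"
    unfolding subalgebra_def eq
  proof
    show "sets (sigma (space M) G) \<subseteq> sets M"
      using sets_measure_of[OF Gp] sets.sigma_sets_subset[OF GM] by simp
    show "space (sigma (space M) G) = space M" using space_measure_of[OF Gp] by simp
  qed
  then show "finite_measure_subalgebra M (gen_sigma M g k)"
    unfolding finite_measure_subalgebra_def finite_measure_subalgebra_axioms_def
    using P.finite_measure_axioms by simp
qed


lemma nn_int_cond:
  assumes S: "sigma_finite_subalgebra M F" and g[measurable]: "g \<in> borel_measurable M"
  shows "(\<integral>\<^sup>+\<omega>. nn_cond_exp M F g \<omega> \<partial>M) = (\<integral>\<^sup>+\<omega>. g \<omega> \<partial>M)"
proof -
  interpret S: sigma_finite_subalgebra M F by fact
  have "(\<integral>\<^sup>+\<omega>. (\<lambda>_. 1) \<omega> * nn_cond_exp M F g \<omega> \<partial>M) = (\<integral>\<^sup>+\<omega>. (\<lambda>_. 1) \<omega> * g \<omega> \<partial>M)"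
    by (rule S.nn_cond_exp_intg) auto
  then show ?thesis by simp
qed



lemma cond_ab:
  fixes Rk T e :: "'w \<Rightarrow> 'a::euclidean_space"
  assumes P: "prob_space M" and S: "sigma_finite_subalgebra M F" and Rint: "integrable M Rk"
    and em[measurable]: "e \<in> borel_measurable M" and Tm[measurable]: "T \<in> borel_measurable M"
    and pw: "\<forall>\<omega>\<in>space M. norm (T \<omega> - Rk \<omega>) \<le> norm (e \<omega>)"
    and cnd: "AE \<omega> in M. nn_cond_exp M F (\<lambda>\<omega>. ennreal ((norm (e \<omega>))\<^sup>2)) \<omega>
                 \<le> ennreal (\<eta>\<^sup>2 / 4 * (norm (vec_cond_exp M F Rk \<omega>))\<^sup>2 + c)"
    and eta: "0 \<le> \<eta>" "\<eta> < 1" and c0: "0 \<le> c"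
  shows "(\<integral>\<^sup>+\<omega>. ennreal ((norm (e \<omega>))\<^sup>2) \<partial>M)
           \<le> ennreal (\<eta>\<^sup>2 / (2 - \<eta>\<^sup>2) + 1) * (\<integral>\<^sup>+\<omega>. ennreal ((norm (T \<omega>))\<^sup>2) \<partial>M) + ennreal (2 * c / (2 - \<eta>\<^sup>2))"
    and "(\<integral>\<^sup>+\<omega>. ennreal ((norm (e \<omega>))\<^sup>2) \<partial>M)
           \<le> ennreal (\<eta>\<^sup>2 / 4) * (\<integral>\<^sup>+\<omega>. ennreal ((norm (Rk \<omega>))\<^sup>2) \<partial>M) + ennreal c"
proof -
  interpret P: prob_space M by fact
  interpret S: sigma_finite_subalgebra M F by fact
  have Rm[measurable]: "Rk \<in> borel_measurable M" using Rint by auto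
  define N where "N = nn_cond_exp M F (\<lambda>\<omega>. ennreal ((norm (e \<omega>))\<^sup>2))"
  define A where "A = nn_cond_exp M F (\<lambda>\<omega>. ennreal ((norm (T \<omega>))\<^sup>2))"
  define J where "J = nn_cond_exp M F (\<lambda>\<omega>. ennreal ((norm (Rk \<omega>))\<^sup>2))"
  define V where "V = vec_cond_exp M F Rk"
  have Vm[measurable]: "V \<in> borel_measurable M" unfolding V_def vec_cond_exp_def by measurable
  have Nm[measurable]: "N \<in> borel_measurable M" "A \<in> borel_measurable M" "J \<in> borel_measurable M"
    unfolding N_def A_def J_def by measurable
  have AE2: "AE \<omega> in M. ennreal ((norm (V \<omega>))\<^sup>2) \<le> J \<omega>"
    unfolding V_def J_def by (rule vec_jensen[OF P S Rint])
  have AE3: "AE \<omega> in M. J \<omega> \<le> nn_cond_exp M F (\<lambda>\<omega>. 2 * ennreal ((norm (T \<omega>))\<^sup>2) + 2 * ennreal ((norm (e \<omega>))\<^sup>2)) \<omega>"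
    unfolding J_def
  proof (rule S.nn_cond_exp_mono)
    show "AE \<omega> in M. ennreal ((norm (Rk \<omega>))\<^sup>2) \<le> 2 * ennreal ((norm (T \<omega>))\<^sup>2) + 2 * ennreal ((norm (e \<omega>))\<^sup>2)"
    proof (rule AE_I2)
      fix \<omega> assume \<omega>: "\<omega> \<in> space M"
      have "norm (Rk \<omega>) \<le> norm (T \<omega>) + norm (T \<omega> - Rk \<omega>)"
        using norm_triangle_ineq4[of "T \<omega>" "T \<omega> - Rk \<omega>"] by simp
      also have "\<dots> \<le> norm (T \<omega>) + norm (e \<omega>)" using pw \<omega> by simp
      finally have "(norm (Rk \<omega>))\<^sup>2 \<le> (norm (T \<omega>) + norm (e \<omega>))\<^sup>2" by (intro power_mono) auto
      also have "\<dots> \<le> 2 * (norm (T \<omega>))\<^sup>2 + 2 * (norm (e \<omega>))\<^sup>2"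
      proof -
        have "0 \<le> (norm (T \<omega>) - norm (e \<omega>))\<^sup>2" by simp
        then show ?thesis by (simp add: power2_eq_square algebra_simps)
      qed
      finally have "ennreal ((norm (Rk \<omega>))\<^sup>2) \<le> ennreal (2 * (norm (T \<omega>))\<^sup>2 + 2 * (norm (e \<omega>))\<^sup>2)"
        by (rule ennreal_leI)
      then show "ennreal ((norm (Rk \<omega>))\<^sup>2) \<le> 2 * ennreal ((norm (T \<omega>))\<^sup>2) + 2 * ennreal ((norm (e \<omega>))\<^sup>2)"
        by (simp add: ennreal_plus ennreal_mult)
    qed
  qed measurable
  have AE4: "AE \<omega> in M. nn_cond_exp M F (\<lambda>\<omega>. 2 * ennreal ((norm (T \<omega>))\<^sup>2)) \<omega>
        + nn_cond_exp M F (\<lambda>\<omega>. 2 * ennreal ((norm (e \<omega>))\<^sup>2)) \<omega>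
      = nn_cond_exp M F (\<lambda>\<omega>. 2 * ennreal ((norm (T \<omega>))\<^sup>2) + 2 * ennreal ((norm (e \<omega>))\<^sup>2)) \<omega>"
    by (rule S.nn_cond_exp_sum) measurable
  have AE5: "AE \<omega> in M. (\<lambda>_. 2) \<omega> * A \<omega> = nn_cond_exp M F (\<lambda>\<omega>. (\<lambda>_. 2) \<omega> * ennreal ((norm (T \<omega>))\<^sup>2)) \<omega>"
    unfolding A_def by (rule S.nn_cond_exp_prod) measurable
  have AE6: "AE \<omega> in M. (\<lambda>_. 2) \<omega> * N \<omega> = nn_cond_exp M F (\<lambda>\<omega>. (\<lambda>_. 2) \<omega> * ennreal ((norm (e \<omega>))\<^sup>2)) \<omega>"
    unfolding N_def by (rule S.nn_cond_exp_prod) measurable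
  have AE1: "AE \<omega> in M. N \<omega> \<le> ennreal (\<eta>\<^sup>2 / 4 * (norm (V \<omega>))\<^sup>2 + c)"
    using cnd unfolding N_def V_def .
  have comb: "AE \<omega> in M. N \<omega> \<le> ennreal (\<eta>\<^sup>2 / (2 - \<eta>\<^sup>2) + 1) * A \<omega> + ennreal (2 * c / (2 - \<eta>\<^sup>2))"
    using AE1 AE2 AE3 AE4 AE5 AE6
  proof eventually_elim
    case (elim \<omega>)
    have vle: "ennreal ((norm (V \<omega>))\<^sup>2) \<le> 2 * A \<omega> + 2 * N \<omega>" using elim by simp
    have e2: "\<eta>\<^sup>2 < 1" using eta by (simp add: power_less_one_iff abs_less_iff) 
    have e2': "0 < 2 - \<eta>\<^sup>2" using e2 by simp
    have kpos: "0 < \<eta>\<^sup>2 / (2 - \<eta>\<^sup>2) + 1" using e2' by (simp add: add_nonneg_pos)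
    show ?case
    proof (cases "A \<omega> = \<infinity>")
      case True
      then show ?thesis using kpos by (simp add: ennreal_mult_top)
    next
      case False
      have Nfin: "N \<omega> \<noteq> \<infinity>"
      proof
        assume "N \<omega> = \<infinity>"
        then show False using elim(1) by (simp add: top_unique)
      qed
      define n where "n = enn2real (N \<omega>)"
      define aa where "aa = enn2real (A \<omega>)"
      have Ne: "N \<omega> = ennreal n" unfolding n_def using Nfin by (simp add: ennreal_enn2real_if)
      have Ae: "A \<omega> = ennreal aa" unfolding aa_def using False by (simp add: ennreal_enn2real_if)
      have n0: "0 \<le> n" "0 \<le> aa" unfolding n_def aa_def by auto
      have vv: "ennreal ((norm (V \<omega>))\<^sup>2) \<le> ennreal (2 * aa + 2 * n)"
        using vle Ne Ae n0 by (simp add: ennreal_plus ennreal_mult)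
      have v0: "0 \<le> 2 * aa + 2 * n" using n0 by simp
      have v: "(norm (V \<omega>))\<^sup>2 \<le> 2 * aa + 2 * n" using vv ennreal_le_iff[OF v0] by blast
      have nn: "ennreal n \<le> ennreal (\<eta>\<^sup>2 / 4 * (norm (V \<omega>))\<^sup>2 + c)" using elim(1) Ne by simp
      have n10: "0 \<le> \<eta>\<^sup>2 / 4 * (norm (V \<omega>))\<^sup>2 + c" using c0 by simp
      have n1: "n \<le> \<eta>\<^sup>2 / 4 * (norm (V \<omega>))\<^sup>2 + c" using nn ennreal_le_iff[OF n10] by blast
      have "\<eta>\<^sup>2 / 4 * (norm (V \<omega>))\<^sup>2 \<le> \<eta>\<^sup>2 / 4 * (2 * aa + 2 * n)" using v by (intro mult_left_mono) auto
      then have "n \<le> \<eta>\<^sup>2 / 2 * aa + \<eta>\<^sup>2 / 2 * n + c" using n1 by (simp add: algebra_simps)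
      then have "(2 - \<eta>\<^sup>2) * n \<le> \<eta>\<^sup>2 * aa + 2 * c" by (simp add: algebra_simps)
      then have "n \<le> (\<eta>\<^sup>2 * aa + 2 * c) / (2 - \<eta>\<^sup>2)" using e2' by (simp add: le_divide_eq mult.commute)
      also have "\<dots> = \<eta>\<^sup>2 / (2 - \<eta>\<^sup>2) * aa + 2 * c / (2 - \<eta>\<^sup>2)" by (simp add: add_divide_distrib)
      also have "\<dots> \<le> (\<eta>\<^sup>2 / (2 - \<eta>\<^sup>2) + 1) * aa + 2 * c / (2 - \<eta>\<^sup>2)" using n0 by (simp add: algebra_simps)
      finally have "ennreal n \<le> ennreal ((\<eta>\<^sup>2 / (2 - \<eta>\<^sup>2) + 1) * aa + 2 * c / (2 - \<eta>\<^sup>2))" by (rule ennreal_leI)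
      then show ?thesis using Ne Ae n0 kpos e2' c0 by (simp add: ennreal_plus ennreal_mult)
    qed
  qed
  have EN: "(\<integral>\<^sup>+\<omega>. ennreal ((norm (e \<omega>))\<^sup>2) \<partial>M) = (\<integral>\<^sup>+\<omega>. N \<omega> \<partial>M)"
    unfolding N_def by (rule nn_int_cond[OF S, symmetric]) measurable
  have EA: "(\<integral>\<^sup>+\<omega>. A \<omega> \<partial>M) = (\<integral>\<^sup>+\<omega>. ennreal ((norm (T \<omega>))\<^sup>2) \<partial>M)"
    unfolding A_def by (rule nn_int_cond[OF S]) measurable
  have EJ: "(\<integral>\<^sup>+\<omega>. J \<omega> \<partial>M) = (\<integral>\<^sup>+\<omega>. ennreal ((norm (Rk \<omega>))\<^sup>2) \<partial>M)"
    unfolding J_def by (rule nn_int_cond[OF S]) measurable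
  show "(\<integral>\<^sup>+\<omega>. ennreal ((norm (e \<omega>))\<^sup>2) \<partial>M)
           \<le> ennreal (\<eta>\<^sup>2 / (2 - \<eta>\<^sup>2) + 1) * (\<integral>\<^sup>+\<omega>. ennreal ((norm (T \<omega>))\<^sup>2) \<partial>M) + ennreal (2 * c / (2 - \<eta>\<^sup>2))"
  proof -
    have "(\<integral>\<^sup>+\<omega>. N \<omega> \<partial>M) \<le> (\<integral>\<^sup>+\<omega>. ennreal (\<eta>\<^sup>2 / (2 - \<eta>\<^sup>2) + 1) * A \<omega> + ennreal (2 * c / (2 - \<eta>\<^sup>2)) \<partial>M)"
      by (rule nn_integral_mono_AE[OF comb])
    also have "\<dots> = ennreal (\<eta>\<^sup>2 / (2 - \<eta>\<^sup>2) + 1) * (\<integral>\<^sup>+\<omega>. A \<omega> \<partial>M) + ennreal (2 * c / (2 - \<eta>\<^sup>2))"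
      by (simp add: nn_integral_add nn_integral_cmult P.emeasure_space_1)
    finally show ?thesis using EN EA by simp
  qed
  show "(\<integral>\<^sup>+\<omega>. ennreal ((norm (e \<omega>))\<^sup>2) \<partial>M)
           \<le> ennreal (\<eta>\<^sup>2 / 4) * (\<integral>\<^sup>+\<omega>. ennreal ((norm (Rk \<omega>))\<^sup>2) \<partial>M) + ennreal c"
  proof -
    have "AE \<omega> in M. N \<omega> \<le> ennreal (\<eta>\<^sup>2 / 4) * J \<omega> + ennreal c"
      using AE1 AE2
    proof eventually_elim
      case (elim \<omega>)
      have q1: "ennreal (\<eta>\<^sup>2 / 4 * (norm (V \<omega>))\<^sup>2 + c) = ennreal (\<eta>\<^sup>2 / 4 * (norm (V \<omega>))\<^sup>2) + ennreal c"
        by (rule ennreal_plus) (use c0 in auto)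
      have q2: "ennreal (\<eta>\<^sup>2 / 4 * (norm (V \<omega>))\<^sup>2) = ennreal (\<eta>\<^sup>2 / 4) * ennreal ((norm (V \<omega>))\<^sup>2)"
        by (rule ennreal_mult) auto
      have "N \<omega> \<le> ennreal (\<eta>\<^sup>2 / 4) * ennreal ((norm (V \<omega>))\<^sup>2) + ennreal c"
        using elim(1) unfolding q1 q2 .
      also have "\<dots> \<le> ennreal (\<eta>\<^sup>2 / 4) * J \<omega> + ennreal c"
        using elim(2) by (intro add_right_mono mult_left_mono) auto
      finally show ?case .
    qed
    then have "(\<integral>\<^sup>+\<omega>. N \<omega> \<partial>M) \<le> (\<integral>\<^sup>+\<omega>. ennreal (\<eta>\<^sup>2 / 4) * J \<omega> + ennreal c \<partial>M)"
      by (rule nn_integral_mono_AE)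
    also have "\<dots> = ennreal (\<eta>\<^sup>2 / 4) * (\<integral>\<^sup>+\<omega>. J \<omega> \<partial>M) + ennreal c"
      by (simp add: nn_integral_add nn_integral_cmult P.emeasure_space_1)
    finally show ?thesis using EN EJ by simp
  qed
qed




lemma nsq_add: "(norm (a + b))\<^sup>2 = (norm a)\<^sup>2 + 2 * (a \<bullet> b) + (norm (b::'a::real_inner))\<^sup>2"
  by (simp add: power2_norm_eq_inner inner_add_left inner_add_right inner_commute)

lemma nsq_diff: "(norm (a - b))\<^sup>2 = (norm a)\<^sup>2 - 2 * (a \<bullet> b) + (norm (b::'a::real_inner))\<^sup>2"
  by (simp add: power2_norm_eq_inner inner_diff_left inner_diff_right inner_commute)

lemma ccp_real:
  assumes "closed_convex_proper h" "h x \<noteq> \<infinity>"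
  shows "h x = ereal (real_of_ereal (h x))"
  using assms unfolding closed_convex_proper_def by (cases "h x") auto

lemma ccp_epi:
  assumes "closed_convex_proper h" "h x \<noteq> \<infinity>"
  shows "(x, real_of_ereal (h x)) \<in> epigraph h"
  using ccp_real[OF assms] unfolding epigraph_def by simp

lemma ccp_convex:
  assumes H: "closed_convex_proper h" and hx: "h x \<noteq> \<infinity>" and hy: "h y \<noteq> \<infinity>"
    and t: "0 \<le> t" "t \<le> 1"
  shows "h ((1 - t) *\<^sub>R x + t *\<^sub>R y) \<le> ereal ((1 - t) * real_of_ereal (h x) + t * real_of_ereal (h y))"
proof -
  have c: "convex (epigraph h)" using H unfolding closed_convex_proper_def by simp
  have "(1 - t) *\<^sub>R (x, real_of_ereal (h x)) + t *\<^sub>R (y, real_of_ereal (h y)) \<in> epigraph h"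
    using c ccp_epi[OF H hx] ccp_epi[OF H hy] t unfolding convex_def
    by (metis add.commute diff_add_cancel diff_ge_0_iff_ge)
  then have "((1 - t) *\<^sub>R x + t *\<^sub>R y, (1 - t) * real_of_ereal (h x) + t * real_of_ereal (h y)) \<in> epigraph h"
    by (simp add: scaleR_Pair)
  then show ?thesis unfolding epigraph_def by simp
qed

lemma ccp_minorant:
  fixes h :: "'a::euclidean_space \<Rightarrow> ereal"
  assumes H: "closed_convex_proper h"
  shows "\<exists>u c. \<forall>z. ereal (u \<bullet> z + c) \<le> h z"
proof -
  obtain x1 where x1: "h x1 \<noteq> \<infinity>" using H unfolding closed_convex_proper_def by auto
  define r1 where "r1 = real_of_ereal (h x1)"
  have hx1: "h x1 = ereal r1" using ccp_real[OF H x1] r1_def by simp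
  have nin: "(x1, r1 - 1) \<notin> epigraph h" using hx1 unfolding epigraph_def by simp
  have cl: "closed (epigraph h)" "convex (epigraph h)" using H unfolding closed_convex_proper_def by auto
  obtain a b where ab: "a \<bullet> (x1, r1 - 1) < b" "\<forall>w\<in>epigraph h. b < a \<bullet> w"
    using separating_hyperplane_closed_point[OF cl(2) cl(1) nin] by blast
  obtain av s where a: "a = (av, s)" by (cases a)
  have "(x1, r1) \<in> epigraph h" using hx1 unfolding epigraph_def by simp
  then have "b < (av, s) \<bullet> (x1, r1)" using ab(2) a by blast
  then have b2: "b < av \<bullet> x1 + s * r1" by (simp add: inner_Pair)
  have b1: "av \<bullet> x1 + s * (r1 - 1) < b" using ab(1) a by (simp add: inner_Pair)
  have spos: "s > 0" using b1 b2 by (simp add: algebra_simps)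
  show ?thesis
  proof (intro exI allI)
    fix z
    show "ereal ((- (1/s) *\<^sub>R av) \<bullet> z + b / s) \<le> h z"
    proof (cases "h z = \<infinity>")
      case True then show ?thesis by simp
    next
      case False
      have "(z, real_of_ereal (h z)) \<in> epigraph h" using ccp_epi[OF H False] .
      then have "b < (av, s) \<bullet> (z, real_of_ereal (h z))" using ab(2) a by blast
      then have "b < av \<bullet> z + s * real_of_ereal (h z)" by (simp add: inner_Pair)
      then have "(- (1/s) *\<^sub>R av) \<bullet> z + b / s < real_of_ereal (h z)"
        using spos by (simp add: field_simps)
      then show ?thesis using ccp_real[OF H False] by (metis ereal_less_eq(3) less_eq_real_def)
    qed
  qed
qed

lemma sq_bound_aux:
  fixes r A n a :: real
  assumes "0 \<le> r" "0 < a" "r\<^sup>2 / (2*a) \<le> A + n * r" "0 \<le> n"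
  shows "r \<le> 1 + (4*a*\<bar>A\<bar> + 4*a\<^sup>2*n\<^sup>2)"
proof -
  have "r\<^sup>2 \<le> 2*a*(A + n * r)" using assms(3) assms(2) by (simp add: pos_divide_le_eq mult.commute)
  then have 1: "r\<^sup>2 \<le> 2*a*A + 2*a*n*r" by (simp add: algebra_simps)
  have "0 \<le> (r - 2*a*n)\<^sup>2" by simp
  then have 2: "4*a*n*r \<le> r\<^sup>2 + 4*a\<^sup>2*n\<^sup>2" by (simp add: power2_eq_square algebra_simps)
  have 3: "a*A \<le> a*\<bar>A\<bar>" using assms(2) by (simp add: mult_left_mono)
  have K: "r\<^sup>2 \<le> 4*a*\<bar>A\<bar> + 4*a\<^sup>2*n\<^sup>2" using 1 2 3 by linarith
  show ?thesis
  proof (cases "r \<le> 1")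
    case True
    have "0 \<le> 4*a*\<bar>A\<bar> + 4*a\<^sup>2*n\<^sup>2" using assms(2) by simp
    then show ?thesis using True by linarith
  next
    case False
    then have "r \<le> r\<^sup>2" by (simp add: power2_eq_square)
    then show ?thesis using K by simp
  qed
qed



lemma prox_exists:
  fixes h :: "'a::euclidean_space \<Rightarrow> ereal"
  assumes H: "closed_convex_proper h" and a: "\<alpha> > 0"
  shows "\<exists>p. \<forall>z. h p + ereal ((norm (p - y))\<^sup>2 / (2*\<alpha>)) \<le> h z + ereal ((norm (z - y))\<^sup>2 / (2*\<alpha>))"
proof -
  obtain u c where uc: "\<And>z. ereal (u \<bullet> z + c) \<le> h z" using ccp_minorant[OF H] by blast
  obtain x1 where x1: "h x1 \<noteq> \<infinity>" using H unfolding closed_convex_proper_def by auto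
  define r1 where "r1 = real_of_ereal (h x1)"
  have hx1: "h x1 = ereal r1" using ccp_real[OF H x1] r1_def by simp
  define Q where "Q = (\<lambda>w::'a\<times>real. snd w + (norm (fst w - y))\<^sup>2 / (2*\<alpha>))"
  define c0 where "c0 = Q (x1, r1)"
  define S where "S = epigraph h \<inter> {w. Q w \<le> c0}"
  have contQ: "continuous_on UNIV Q" unfolding Q_def using a by (intro continuous_intros) auto
  have cl: "closed (epigraph h)" using H unfolding closed_convex_proper_def by auto
  have clS: "closed S" unfolding S_def
    by (intro closed_Int cl closed_Collect_le contQ continuous_on_const)
  define nu where "nu = norm u"
  define K where "K = 4*\<alpha>*\<bar>c0 - c - u \<bullet> y\<bar> + 4*\<alpha>\<^sup>2*nu\<^sup>2"
  define Z where "Z = norm y + (1 + K)"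
  have nu0: "0 \<le> nu" unfolding nu_def by simp
  have bS: "bounded S"
    unfolding bounded_iff
  proof (intro exI ballI)
    fix w assume wS: "w \<in> S"
    obtain z t where w: "w = (z, t)" by (cases w)
    have hz: "h z \<le> ereal t" using wS w unfolding S_def epigraph_def by simp
    have ut: "u \<bullet> z + c \<le> t" using order_trans[OF uc hz] by simp
    define r where "r = norm (z - y)"
    have Qw: "t + r\<^sup>2 / (2*\<alpha>) \<le> c0" using wS w unfolding S_def Q_def r_def by simp
    have "u \<bullet> (z - y) \<ge> - (nu * r)"
      using Cauchy_Schwarz_ineq2[of u "z - y"] unfolding nu_def r_def by linarith
    then have uz: "u \<bullet> z \<ge> u \<bullet> y - nu * r" by (simp add: inner_diff_right)
    have "r\<^sup>2 / (2*\<alpha>) \<le> (c0 - c - u \<bullet> y) + nu * r" using Qw ut uz by linarith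
    then have rK: "r \<le> 1 + K" unfolding K_def using sq_bound_aux[of r \<alpha> "c0 - c - u \<bullet> y" nu] a nu0
      by (simp add: r_def)
    have nz: "norm z \<le> Z" unfolding Z_def using rK norm_triangle_ineq2[of z y] r_def by linarith
    have t1: "t \<le> c0" using Qw a by (smt (verit) divide_nonneg_pos zero_le_power2)
    have "u \<bullet> z \<ge> - (nu * norm z)" using Cauchy_Schwarz_ineq2[of u z] unfolding nu_def by linarith
    moreover have "nu * norm z \<le> nu * Z" using nz nu0 by (simp add: mult_left_mono)
    ultimately have t2: "t \<ge> - (nu * Z) - \<bar>c\<bar>" using ut by linarith
    have A: "norm w \<le> norm z + norm t" using w norm_Pair_le[of z t] by simp
    have znn: "0 \<le> nu * Z" using nu0 nz norm_ge_zero[of z] by (meson mult_nonneg_nonneg order_trans)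
    have B: "\<bar>t\<bar> \<le> \<bar>c0\<bar> + nu * Z + \<bar>c\<bar>"
      by (simp only: abs_le_iff) (use abs_ge_self[of c0] abs_ge_self[of c] t1 t2 znn in linarith)
    show "norm w \<le> Z + (\<bar>c0\<bar> + nu * Z + \<bar>c\<bar>)" using A B nz by simp
  qed
  have x1S: "(x1, r1) \<in> S" unfolding S_def c0_def epigraph_def using hx1 by simp
  have "compact S" using bS clS compact_eq_bounded_closed by blast
  then obtain w0 where w0: "w0 \<in> S" "\<And>w. w \<in> S \<Longrightarrow> Q w0 \<le> Q w"
    using continuous_attains_inf[of S Q] x1S continuous_on_subset[OF contQ] by blast
  obtain p tp where pt: "w0 = (p, tp)" by (cases w0)
  have hp: "h p \<le> ereal tp" using w0(1) pt unfolding S_def epigraph_def by simp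
  have Qc0: "Q w0 \<le> c0" using w0(1) unfolding S_def by simp
  show ?thesis
  proof (intro exI allI)
    fix z
    show "h p + ereal ((norm (p - y))\<^sup>2 / (2*\<alpha>)) \<le> h z + ereal ((norm (z - y))\<^sup>2 / (2*\<alpha>))"
    proof (cases "h z = \<infinity>")
      case True then show ?thesis by simp
    next
      case False
      define rz where "rz = real_of_ereal (h z)"
      have hz: "h z = ereal rz" using ccp_real[OF H False] rz_def by simp
      have "Q w0 \<le> Q (z, rz)"
      proof (cases "Q (z, rz) \<le> c0")
        case True
        then have "(z, rz) \<in> S" unfolding S_def epigraph_def using hz by simp
        then show ?thesis using w0(2) by blast
      next
        case False then show ?thesis using Qc0 by simp
      qed
      then have "tp + (norm (p - y))\<^sup>2 / (2*\<alpha>) \<le> rz + (norm (z - y))\<^sup>2 / (2*\<alpha>)"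
        unfolding Q_def using pt by simp
      then have "ereal tp + ereal ((norm (p - y))\<^sup>2 / (2*\<alpha>)) \<le> h z + ereal ((norm (z - y))\<^sup>2 / (2*\<alpha>))"
        using hz by simp
      moreover have "h p + ereal ((norm (p - y))\<^sup>2 / (2*\<alpha>)) \<le> ereal tp + ereal ((norm (p - y))\<^sup>2 / (2*\<alpha>))"
        using add_right_mono[OF hp, of "ereal ((norm (p - y))\<^sup>2 / (2*\<alpha>))"] by simp
      ultimately show ?thesis by (rule order_trans[rotated])
    qed
  qed
qed





lemma midpoint_nsq:
  fixes u v :: "'a::real_inner"
  shows "(norm ((1/2::real) *\<^sub>R (u + v)))\<^sup>2 = ((norm u)\<^sup>2 + (norm v)\<^sup>2) / 2 - (norm (u - v))\<^sup>2 / 4"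
proof -
  have "(norm ((1/2::real) *\<^sub>R (u + v)))\<^sup>2 = (norm (u + v))\<^sup>2 / 4"
    by (simp add: power_mult_distrib power_divide)
  then show ?thesis unfolding nsq_add nsq_diff by (simp add: field_simps)
qed

lemma prox_min_fin:
  assumes H: "closed_convex_proper h"
    and P: "\<forall>z. h p + ereal ((norm (p - y))\<^sup>2 / (2*\<alpha>)) \<le> h z + ereal ((norm (z - y))\<^sup>2 / (2*\<alpha>))"
  shows "h p \<noteq> \<infinity>"
proof
  assume hp: "h p = \<infinity>"
  obtain x1 where x1: "h x1 \<noteq> \<infinity>" using H unfolding closed_convex_proper_def by auto
  have "h p + ereal ((norm (p - y))\<^sup>2 / (2*\<alpha>)) \<le> h x1 + ereal ((norm (x1 - y))\<^sup>2 / (2*\<alpha>))"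
    using P by blast
  then show False using hp x1 ccp_real[OF H x1] by (metis PInfty_neq_ereal(1) ereal_infty_less_eq(1) plus_ereal.simps(1) plus_ereal.simps(2))
qed

lemma prox_unique:
  fixes h :: "'a::euclidean_space \<Rightarrow> ereal"
  assumes H: "closed_convex_proper h" and a: "\<alpha> > 0"
    and P: "\<forall>z. h p + ereal ((norm (p - y))\<^sup>2 / (2*\<alpha>)) \<le> h z + ereal ((norm (z - y))\<^sup>2 / (2*\<alpha>))"
    and Q: "\<forall>z. h q + ereal ((norm (q - y))\<^sup>2 / (2*\<alpha>)) \<le> h z + ereal ((norm (z - y))\<^sup>2 / (2*\<alpha>))"
  shows "p = q"
proof -
  have fp: "h p \<noteq> \<infinity>" by (rule prox_min_fin[OF H P])
  have fq: "h q \<noteq> \<infinity>" by (rule prox_min_fin[OF H Q])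
  define A where "A = real_of_ereal (h p)"
  define B where "B = real_of_ereal (h q)"
  have hp: "h p = ereal A" using ccp_real[OF H fp] A_def by simp
  have hq: "h q = ereal B" using ccp_real[OF H fq] B_def by simp
  define np where "np = (norm (p - y))\<^sup>2"
  define nq where "nq = (norm (q - y))\<^sup>2"
  define d where "d = (norm (p - q))\<^sup>2"
  define m where "m = (1 - 1/2) *\<^sub>R p + (1/2::real) *\<^sub>R q"
  have "h p + ereal (np / (2*\<alpha>)) \<le> h q + ereal (nq / (2*\<alpha>))" using P unfolding np_def nq_def by blast
  then have 1: "A + np/(2*\<alpha>) \<le> B + nq/(2*\<alpha>)" using hp hq by simp
  have "h q + ereal (nq / (2*\<alpha>)) \<le> h p + ereal (np / (2*\<alpha>))" using Q unfolding np_def nq_def by blast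
  then have 2: "B + nq/(2*\<alpha>) \<le> A + np/(2*\<alpha>)" using hp hq by simp
  have hm: "h m \<le> ereal ((1 - 1/2) * A + (1/2) * B)"
    using ccp_convex[OF H fp fq, of "1/2"] unfolding m_def A_def B_def by simp
  have "m - y = (1/2::real) *\<^sub>R ((p - y) + (q - y))"
  proof -
    have "(1/2::real) *\<^sub>R y + (1/2) *\<^sub>R y = y" by (simp flip: scaleR_add_left)
    then show ?thesis unfolding m_def by (simp add: algebra_simps)
  qed
  then have nm: "(norm (m - y))\<^sup>2 = (np + nq) / 2 - d / 4"
    unfolding np_def nq_def d_def using midpoint_nsq[of "p - y" "q - y"] by simp
  have "h p + ereal (np / (2*\<alpha>)) \<le> h m + ereal ((norm (m - y))\<^sup>2 / (2*\<alpha>))" using P unfolding np_def by blast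
  also have "\<dots> \<le> ereal ((1 - 1/2) * A + (1/2) * B) + ereal ((norm (m - y))\<^sup>2 / (2*\<alpha>))"
    using hm by (rule add_right_mono)
  finally have 3: "A + np / (2*\<alpha>) \<le> (1 - 1/2) * A + (1/2) * B + ((np + nq) / 2 - d / 4) / (2*\<alpha>)"
    using hp nm by simp
  have "d / (8*\<alpha>) \<le> 0"
  proof -
    define X where "X = np/(2*\<alpha>)"
    define Y where "Y = nq/(2*\<alpha>)"
    define D where "D = d/(8*\<alpha>)"
    have "((np + nq) / 2 - d / 4) / (2*\<alpha>) = X/2 + Y/2 - D"
      unfolding X_def Y_def D_def using a by (simp add: field_simps)
    moreover have "(1 - 1/2) * A = A / 2" by simp
    ultimately show ?thesis using 1 2 3 unfolding X_def[symmetric] Y_def[symmetric] D_def[symmetric] by linarith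
  qed
  then have "d \<le> 0" using a by (simp add: divide_le_0_iff)
  then show "p = q" unfolding d_def by simp
qed

lemma prox_char:
  fixes h :: "'a::euclidean_space \<Rightarrow> ereal"
  assumes H: "closed_convex_proper h" and a: "\<alpha> > 0"
  shows "\<forall>z. h (prox \<alpha> h y) + ereal ((norm (prox \<alpha> h y - y))\<^sup>2 / (2*\<alpha>))
            \<le> h z + ereal ((norm (z - y))\<^sup>2 / (2*\<alpha>))"
proof -
  obtain p where p: "\<forall>z. h p + ereal ((norm (p - y))\<^sup>2 / (2*\<alpha>)) \<le> h z + ereal ((norm (z - y))\<^sup>2 / (2*\<alpha>))"
    using prox_exists[OF H a] by blast
  have "prox \<alpha> h y = p" unfolding prox_def
    by (rule the_equality) (use p prox_unique[OF H a] in auto)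
  then show ?thesis using p by simp
qed

lemma prox_fin:
  fixes h :: "'a::euclidean_space \<Rightarrow> ereal"
  assumes H: "closed_convex_proper h" and a: "\<alpha> > 0"
  shows "h (prox \<alpha> h y) \<noteq> \<infinity>"
  by (rule prox_min_fin[OF H prox_char[OF H a]])




lemma le_small_limit:
  fixes a b c :: real
  assumes "\<And>t. 0 < t \<Longrightarrow> t \<le> 1 \<Longrightarrow> a \<le> b + t * c"
  shows "a \<le> b"
proof (rule ccontr)
  assume "\<not> a \<le> b"
  then have ab: "a - b > 0" by simp
  show False
  proof (cases "c \<le> 0")
    case True
    then show False using assms[of 1] ab by simp
  next
    case False
    define t where "t = min 1 ((a - b) / (2 * c))"
    have t0: "0 < t" "t \<le> 1" unfolding t_def using ab False by auto
    have "t * c \<le> ((a - b) / (2 * c)) * c" unfolding t_def using False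
      by (intro mult_right_mono) auto
    also have "\<dots> = (a - b) / 2" using False by simp
    finally have "2 * (t * c) \<le> a - b" by simp
    then show False using assms[OF t0] ab by linarith
  qed
qed

lemma prox_vi:
  fixes h :: "'a::euclidean_space \<Rightarrow> ereal"
  assumes H: "closed_convex_proper h" and a: "\<alpha> > 0" and hz: "h z \<noteq> \<infinity>"
  shows "real_of_ereal (h (prox \<alpha> h y)) + ((y - prox \<alpha> h y) \<bullet> (z - prox \<alpha> h y)) / \<alpha>
           \<le> real_of_ereal (h z)"
proof -
  define p where "p = prox \<alpha> h y"
  have hpf: "h p \<noteq> \<infinity>" unfolding p_def by (rule prox_fin[OF H a])
  define A where "A = real_of_ereal (h p)"
  define B where "B = real_of_ereal (h z)"
  have hp: "h p = ereal A" using ccp_real[OF H hpf] A_def by simp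
  define I where "I = (p - y) \<bullet> (z - p)"
  define N where "N = (norm (z - p))\<^sup>2"
  have char: "\<forall>w. h p + ereal ((norm (p - y))\<^sup>2 / (2*\<alpha>)) \<le> h w + ereal ((norm (w - y))\<^sup>2 / (2*\<alpha>))"
    unfolding p_def by (rule prox_char[OF H a])
  have key: "A \<le> B + I / \<alpha> + t * (N / (2*\<alpha>))" if t: "0 < t" "t \<le> 1" for t
  proof -
    define zt where "zt = (1 - t) *\<^sub>R p + t *\<^sub>R z"
    have hzt: "h zt \<le> ereal ((1 - t) * A + t * B)"
      using ccp_convex[OF H hpf hz, of t] t unfolding zt_def A_def B_def by simp
    have e: "zt - y = (p - y) + t *\<^sub>R (z - p)" unfolding zt_def by (simp add: algebra_simps)
    have nzt: "(norm (zt - y))\<^sup>2 = (norm (p - y))\<^sup>2 + 2 * t * I + t\<^sup>2 * N"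
      unfolding I_def N_def e nsq_add by (simp add: power_mult_distrib)
    have "h p + ereal ((norm (p - y))\<^sup>2 / (2*\<alpha>)) \<le> h zt + ereal ((norm (zt - y))\<^sup>2 / (2*\<alpha>))"
      using char by blast
    also have "\<dots> \<le> ereal ((1 - t) * A + t * B) + ereal ((norm (zt - y))\<^sup>2 / (2*\<alpha>))"
      using hzt by (rule add_right_mono)
    finally have "A + (norm (p - y))\<^sup>2 / (2*\<alpha>) \<le> (1 - t) * A + t * B + ((norm (p - y))\<^sup>2 + 2 * t * I + t\<^sup>2 * N) / (2*\<alpha>)"
      using hp nzt by simp
    then have "t * A \<le> t * B + (2 * t * I + t\<^sup>2 * N) / (2*\<alpha>)"
      by (simp add: add_divide_distrib algebra_simps)
    also have "\<dots> = t * (B + I / \<alpha> + t * (N / (2*\<alpha>)))"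
      using a by (simp add: field_simps power2_eq_square)
    finally show ?thesis using t(1) by simp
  qed
  have "A \<le> B + I / \<alpha>"
    by (rule le_small_limit[where c = "N / (2*\<alpha>)"]) (use key in \<open>simp add: algebra_simps\<close>)
  moreover have "(y - p) \<bullet> (z - p) = - I" unfolding I_def by (simp add: inner_diff_left inner_diff_right)
  ultimately show ?thesis unfolding p_def[symmetric] A_def[symmetric] B_def[symmetric] by simp
qed

lemma prox_nonexp:
  fixes h :: "'a::euclidean_space \<Rightarrow> ereal"
  assumes H: "closed_convex_proper h" and a: "\<alpha> > 0"
  shows "norm (prox \<alpha> h u - prox \<alpha> h v) \<le> norm (u - v)"
proof -
  define p where "p = prox \<alpha> h u"
  define q where "q = prox \<alpha> h v"
  have fp: "h p \<noteq> \<infinity>" unfolding p_def by (rule prox_fin[OF H a])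
  have fq: "h q \<noteq> \<infinity>" unfolding q_def by (rule prox_fin[OF H a])
  have 1: "real_of_ereal (h p) + ((u - p) \<bullet> (q - p)) / \<alpha> \<le> real_of_ereal (h q)"
    using prox_vi[OF H a fq, of u] unfolding p_def .
  have 2: "real_of_ereal (h q) + ((v - q) \<bullet> (p - q)) / \<alpha> \<le> real_of_ereal (h p)"
    using prox_vi[OF H a fp, of v] unfolding q_def .
  have "((u - p) \<bullet> (q - p)) / \<alpha> + ((v - q) \<bullet> (p - q)) / \<alpha> \<le> 0" using 1 2 by linarith
  then have "(u - p) \<bullet> (q - p) + (v - q) \<bullet> (p - q) \<le> 0" using a
    by (simp add: add_divide_distrib[symmetric] divide_le_0_iff)
  moreover have "(u - p) \<bullet> (q - p) + (v - q) \<bullet> (p - q) = (u - v) \<bullet> (q - p) + (norm (p - q))\<^sup>2"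
    by (simp add: power2_norm_eq_inner inner_diff_left inner_diff_right inner_commute algebra_simps)
  ultimately have "(norm (p - q))\<^sup>2 \<le> (u - v) \<bullet> (p - q)"
    by (simp add: inner_diff_right algebra_simps)
  also have "\<dots> \<le> norm (u - v) * norm (p - q)" by (rule norm_cauchy_schwarz)
  finally have "norm (p - q) * norm (p - q) \<le> norm (u - v) * norm (p - q)" by (simp add: power2_eq_square)
  then show ?thesis unfolding p_def q_def
    by (metis mult_right_le_imp_le norm_ge_zero order_le_less mult_le_cancel_right p_def q_def zero_less_norm_iff eq_iff_diff_eq_0 norm_zero order_trans)
qed




lemma contraction_cont:
  fixes F :: "'a::real_normed_vector \<Rightarrow> 'b::real_normed_vector"
  assumes "\<And>u v. norm (F u - F v) \<le> c * norm (u - v)" "c > 0"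
  shows "continuous_on UNIV F"
  unfolding continuous_on_iff
proof (intro ballI allI impI)
  fix x and e :: real assume e: "e > 0"
  show "\<exists>d>0. \<forall>x'\<in>UNIV. dist x' x < d \<longrightarrow> dist (F x') (F x) < e"
  proof (intro exI[of _ "e / c"] conjI ballI impI)
    show "e / c > 0" using e assms(2) by simp
    fix x' assume "dist x' x < e / c"
    then have "c * norm (x' - x) < e" using assms(2) by (simp add: dist_norm field_simps)
    then show "dist (F x') (F x) < e" using assms(1)[of x' x] by (simp add: dist_norm)
  qed
qed

lemma prox_cont:
  fixes h :: "'a::euclidean_space \<Rightarrow> ereal"
  assumes H: "closed_convex_proper h" and a: "\<alpha> > 0"
  shows "continuous_on UNIV (prox \<alpha> h)"
  by (rule contraction_cont[where c = 1]) (use prox_nonexp[OF H a] in auto)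

lemma hprox_bound:
  fixes h :: "'a::euclidean_space \<Rightarrow> ereal"
  assumes H: "closed_convex_proper h" and a: "\<alpha> > 0"
  shows "\<bar>real_of_ereal (h (prox \<alpha> h v)) - real_of_ereal (h (prox \<alpha> h u))\<bar>
          \<le> (2 * norm (v - u) + norm (u - prox \<alpha> h u)) * norm (v - u) / \<alpha>"
proof -
  define p where "p = prox \<alpha> h u"
  define q where "q = prox \<alpha> h v"
  have fp: "h p \<noteq> \<infinity>" unfolding p_def by (rule prox_fin[OF H a])
  have fq: "h q \<noteq> \<infinity>" unfolding q_def by (rule prox_fin[OF H a])
  have 1: "real_of_ereal (h p) + ((u - p) \<bullet> (q - p)) / \<alpha> \<le> real_of_ereal (h q)"
    using prox_vi[OF H a fq, of u] unfolding p_def .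
  have 2: "real_of_ereal (h q) + ((v - q) \<bullet> (p - q)) / \<alpha> \<le> real_of_ereal (h p)"
    using prox_vi[OF H a fp, of v] unfolding q_def .
  have pq: "norm (q - p) \<le> norm (v - u)" unfolding p_def q_def by (rule prox_nonexp[OF H a])
  have "norm (v - q) \<le> norm (v - u) + norm (u - p) + norm (p - q)"
  proof -
    have t1: "norm ((v - u) + (u - p) + (p - q)) \<le> norm ((v - u) + (u - p)) + norm (p - q)"
      by (rule norm_triangle_ineq)
    have t2: "norm ((v - u) + (u - p)) \<le> norm (v - u) + norm (u - p)" by (rule norm_triangle_ineq)
    have eq: "(v - u) + (u - p) + (p - q) = v - q" by simp
    show ?thesis using t1 t2 unfolding eq by linarith
  qed
  then have vq: "norm (v - q) \<le> 2 * norm (v - u) + norm (u - p)" using pq by (simp add: norm_minus_commute)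
  have "- ((u - p) \<bullet> (q - p)) \<le> norm (u - p) * norm (q - p)"
    using Cauchy_Schwarz_ineq2[of "u - p" "q - p"] by linarith
  also have "\<dots> \<le> (2 * norm (v - u) + norm (u - p)) * norm (v - u)"
    using pq by (intro mult_mono) auto
  finally have i1: "- ((u - p) \<bullet> (q - p)) \<le> (2 * norm (v - u) + norm (u - p)) * norm (v - u)" .
  have "- ((v - q) \<bullet> (p - q)) \<le> norm (v - q) * norm (p - q)"
    using Cauchy_Schwarz_ineq2[of "v - q" "p - q"] by linarith
  also have "\<dots> \<le> (2 * norm (v - u) + norm (u - p)) * norm (v - u)"
    using pq vq by (intro mult_mono) (auto simp: norm_minus_commute)
  finally have i2: "- ((v - q) \<bullet> (p - q)) \<le> (2 * norm (v - u) + norm (u - p)) * norm (v - u)" .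
  have d1: "(- ((u - p) \<bullet> (q - p))) / \<alpha> \<le> (2 * norm (v - u) + norm (u - p)) * norm (v - u) / \<alpha>"
    using i1 a by (intro divide_right_mono) auto
  have d2: "(- ((v - q) \<bullet> (p - q))) / \<alpha> \<le> (2 * norm (v - u) + norm (u - p)) * norm (v - u) / \<alpha>"
    using i2 a by (intro divide_right_mono) auto
  have "real_of_ereal (h p) - real_of_ereal (h q) \<le> (2 * norm (v - u) + norm (u - p)) * norm (v - u) / \<alpha>"
  proof -
    have m1: "(- ((u - p) \<bullet> (q - p))) / \<alpha> = - (((u - p) \<bullet> (q - p)) / \<alpha>)" by simp
    show ?thesis using 1 d1 m1 by linarith
  qed
  moreover have "real_of_ereal (h q) - real_of_ereal (h p) \<le> (2 * norm (v - u) + norm (u - p)) * norm (v - u) / \<alpha>"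
  proof -
    have m2: "(- ((v - q) \<bullet> (p - q))) / \<alpha> = - (((v - q) \<bullet> (p - q)) / \<alpha>)" by simp
    show ?thesis using 2 d2 m2 by linarith
  qed
  ultimately show ?thesis unfolding p_def q_def by linarith
qed

lemma hprox_cont:
  fixes h :: "'a::euclidean_space \<Rightarrow> ereal"
  assumes H: "closed_convex_proper h" and a: "\<alpha> > 0"
  shows "continuous_on UNIV (\<lambda>v. real_of_ereal (h (prox \<alpha> h v)))"
  unfolding continuous_on_iff
proof (intro ballI allI impI)
  fix u and e :: real assume e: "e > 0"
  define c where "c = norm (u - prox \<alpha> h u)"
  have c0: "c \<ge> 0" unfolding c_def by simp
  define d where "d = min 1 (e * \<alpha> / (3 + c))"
  have d0: "d > 0" unfolding d_def using e a c0 by auto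
  show "\<exists>d>0. \<forall>x'\<in>UNIV. dist x' u < d \<longrightarrow>
      dist (real_of_ereal (h (prox \<alpha> h x'))) (real_of_ereal (h (prox \<alpha> h u))) < e"
  proof (intro exI[of _ d] conjI ballI impI d0)
    fix v assume "dist v u < d"
    then have r: "norm (v - u) < d" by (simp add: dist_norm)
    have r1: "norm (v - u) < 1" using r unfolding d_def by simp
    have r2: "norm (v - u) * (3 + c) < e * \<alpha>"
    proof -
      have "norm (v - u) < e * \<alpha> / (3 + c)" using r unfolding d_def by simp
      then show ?thesis using c0 by (simp add: pos_less_divide_eq)
    qed
    have "(2 * norm (v - u) + c) * norm (v - u) \<le> (3 + c) * norm (v - u)"
      using r1 by (intro mult_right_mono) auto
    also have "\<dots> < e * \<alpha>" using r2 by (simp add: mult.commute)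
    finally have "(2 * norm (v - u) + c) * norm (v - u) / \<alpha> < e" using a by (simp add: pos_divide_less_eq)
    then show "dist (real_of_ereal (h (prox \<alpha> h v))) (real_of_ereal (h (prox \<alpha> h u))) < e"
      using hprox_bound[OF H a, of v u] unfolding c_def dist_real_def by linarith
  qed
qed

lemma descent:
  fixes f :: "'a::euclidean_space \<Rightarrow> real"
  assumes A: "assumptionA f gradf h L"
  shows "f y \<le> f x + gradf x \<bullet> (y - x) + L * (norm (y - x))\<^sup>2"
proof -
  define d where "d = y - x"
  define \<phi> where "\<phi> = (\<lambda>t::real. f (x + t *\<^sub>R d))"
  have fd: "\<And>p. (f has_derivative (\<lambda>v. gradf p \<bullet> v)) (at p)" and
    Lip: "\<And>a b. norm (gradf a - gradf b) \<le> L * norm (a - b)" and L0: "L > 0"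
    using A unfolding assumptionA_def by auto
  have der: "(\<phi> has_real_derivative (gradf (x + t *\<^sub>R d) \<bullet> d)) (at t)" for t
  proof -
    have l: "((\<lambda>t. x + t *\<^sub>R d) has_derivative (\<lambda>s. s *\<^sub>R d)) (at t)"
      by (auto intro!: derivative_eq_intros)
    have "((f \<circ> (\<lambda>t. x + t *\<^sub>R d)) has_derivative ((\<lambda>v. gradf (x + t *\<^sub>R d) \<bullet> v) \<circ> (\<lambda>s. s *\<^sub>R d))) (at t)"
      by (rule diff_chain_at[OF l fd])
    moreover have "((\<lambda>v. gradf (x + t *\<^sub>R d) \<bullet> v) \<circ> (\<lambda>s. s *\<^sub>R d)) = (*) (gradf (x + t *\<^sub>R d) \<bullet> d)"
      by (auto simp: fun_eq_iff mult.commute)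
    ultimately show ?thesis unfolding has_field_derivative_def \<phi>_def by (simp add: o_def)
  qed
  obtain z where z: "0 < z" "z < 1" "\<phi> 1 - \<phi> 0 = (1 - 0) * (gradf (x + z *\<^sub>R d) \<bullet> d)"
    using MVT2[of 0 1 \<phi> "\<lambda>t. gradf (x + t *\<^sub>R d) \<bullet> d"] der by auto
  have "\<phi> 1 = f y" "\<phi> 0 = f x" unfolding \<phi>_def d_def by simp_all
  then have eq: "f y - f x - gradf x \<bullet> d = (gradf (x + z *\<^sub>R d) - gradf x) \<bullet> d"
    using z(3) by (simp add: inner_diff_left)
  also have "\<dots> \<le> norm (gradf (x + z *\<^sub>R d) - gradf x) * norm d" by (rule norm_cauchy_schwarz)
  also have "\<dots> \<le> (L * norm (z *\<^sub>R d)) * norm d"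
    using Lip[of "x + z *\<^sub>R d" x] by (intro mult_right_mono) auto
  also have "\<dots> \<le> L * (norm d)\<^sup>2"
  proof -
    have "L * norm (z *\<^sub>R d) * norm d = z * (L * (norm d)\<^sup>2)" using z(1)
      by (simp add: power2_eq_square)
    also have "\<dots> \<le> 1 * (L * (norm d)\<^sup>2)" using z L0 by (intro mult_right_mono) auto
    finally show ?thesis by simp
  qed
  finally show ?thesis unfolding d_def by simp
qed




lemma A_ccp: "assumptionA f gradf h L \<Longrightarrow> closed_convex_proper h"
  unfolding assumptionA_def by simp

lemma A_L: "assumptionA f gradf h L \<Longrightarrow> L > 0"
  unfolding assumptionA_def by simp

lemma A_lower:
  assumes "assumptionA f gradf h L"
  obtains m where "\<And>x. h x \<noteq> \<infinity> \<Longrightarrow> m \<le> f x + real_of_ereal (h x)"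
proof -
  obtain m where m: "\<And>x. ereal m \<le> ereal (f x) + h x" using assms unfolding assumptionA_def by auto
  have "m \<le> f x + real_of_ereal (h x)" if "h x \<noteq> \<infinity>" for x
    using m[of x] ccp_real[OF A_ccp[OF assms] that] by (metis plus_ereal.simps(1) ereal_less_eq(3))
  then show ?thesis using that by blast
qed

lemma step_raw:
  fixes f :: "'a::euclidean_space \<Rightarrow> real"
  assumes A: "assumptionA f gradf h L" and a: "\<alpha> > 0" and hx: "h x \<noteq> \<infinity>"
  shows "f (prox \<alpha> h (x - \<alpha> *\<^sub>R g)) + real_of_ereal (h (prox \<alpha> h (x - \<alpha> *\<^sub>R g)))
     \<le> f x + real_of_ereal (h x) - (norm (x - prox \<alpha> h (x - \<alpha> *\<^sub>R g)))\<^sup>2 / \<alpha>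
        + norm (g - gradf x) * norm (x - prox \<alpha> h (x - \<alpha> *\<^sub>R g))
        + L * (norm (x - prox \<alpha> h (x - \<alpha> *\<^sub>R g)))\<^sup>2"
proof -
  have H: "closed_convex_proper h" by (rule A_ccp[OF A])
  define p where "p = prox \<alpha> h (x - \<alpha> *\<^sub>R g)"
  have vi: "real_of_ereal (h p) + ((x - \<alpha> *\<^sub>R g - p) \<bullet> (x - p)) / \<alpha> \<le> real_of_ereal (h x)"
    using prox_vi[OF H a hx, of "x - \<alpha> *\<^sub>R g"] unfolding p_def .
  have "(x - \<alpha> *\<^sub>R g - p) \<bullet> (x - p) = (norm (x - p))\<^sup>2 - \<alpha> * (g \<bullet> (x - p))"
    by (simp add: power2_norm_eq_inner inner_diff_left inner_diff_right algebra_simps)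
  then have "((x - \<alpha> *\<^sub>R g - p) \<bullet> (x - p)) / \<alpha> = (norm (x - p))\<^sup>2 / \<alpha> - g \<bullet> (x - p)"
    using a by (simp add: field_simps)
  then have 1: "real_of_ereal (h p) \<le> real_of_ereal (h x) - (norm (x - p))\<^sup>2 / \<alpha> + g \<bullet> (x - p)"
    using vi by linarith
  have 2: "f p \<le> f x + gradf x \<bullet> (p - x) + L * (norm (p - x))\<^sup>2" by (rule descent[OF A])
  have 3: "gradf x \<bullet> (p - x) = - (gradf x \<bullet> (x - p))" by (simp add: inner_diff_right)
  have 4: "(g - gradf x) \<bullet> (x - p) \<le> norm (g - gradf x) * norm (x - p)" by (rule norm_cauchy_schwarz)
  have 5: "(g - gradf x) \<bullet> (x - p) = g \<bullet> (x - p) - gradf x \<bullet> (x - p)" by (simp add: inner_diff_left)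
  have 6: "(norm (p - x))\<^sup>2 = (norm (x - p))\<^sup>2" by (simp add: norm_minus_commute)
  have 7: "f p \<le> f x - gradf x \<bullet> (x - p) + L * (norm (x - p))\<^sup>2" using 2 3 6 by simp
  show ?thesis unfolding p_def[symmetric] using 1 7 4 5 by linarith
qed

lemma step_fs:
  fixes f :: "'a::euclidean_space \<Rightarrow> real"
  assumes A: "assumptionA f gradf h L" and a: "\<alpha> > 0" and hx: "h x \<noteq> \<infinity>"
    and eta: "0 \<le> \<eta>" and La: "\<alpha> \<le> (1 - \<eta>) / (2 * L)" and io: "0 \<le> \<iota>" and dl: "0 \<le> \<delta>"
    and ge: "norm (g - gradf x) \<le> \<eta> / 2 * norm ((1 / \<alpha>) *\<^sub>R (x - prox \<alpha> h (x - \<alpha> *\<^sub>R g))) + \<iota> * \<delta>"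
  shows "f (prox \<alpha> h (x - \<alpha> *\<^sub>R g)) + real_of_ereal (h (prox \<alpha> h (x - \<alpha> *\<^sub>R g)))
       + \<alpha> / 4 * (norm ((1 / \<alpha>) *\<^sub>R (x - prox \<alpha> h (x - \<alpha> *\<^sub>R g))))\<^sup>2
     \<le> f x + real_of_ereal (h x) + \<alpha> * \<iota>\<^sup>2 * \<delta>\<^sup>2"
proof -
  define p where "p = prox \<alpha> h (x - \<alpha> *\<^sub>R g)"
  define D where "D = norm (x - p)"
  define e where "e = norm (g - gradf x)"
  have L0: "L > 0" by (rule A_L[OF A])
  have D0: "D \<ge> 0" unfolding D_def by simp
  have nR: "norm ((1 / \<alpha>) *\<^sub>R (x - p)) = D / \<alpha>" unfolding D_def using a by simp
  have raw: "f p + real_of_ereal (h p) \<le> f x + real_of_ereal (h x) - D\<^sup>2 / \<alpha> + e * D + L * D\<^sup>2"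
    using step_raw[OF A a hx, of g] unfolding p_def[symmetric] D_def e_def .
  have ge': "e \<le> \<eta> / 2 * (D / \<alpha>) + \<iota> * \<delta>" using ge unfolding p_def[symmetric] e_def nR .
  have eD: "e * D \<le> \<eta> * D\<^sup>2 / (2 * \<alpha>) + \<iota> * \<delta> * D"
  proof -
    have "e * D \<le> (\<eta> / 2 * (D / \<alpha>) + \<iota> * \<delta>) * D" using ge' D0 by (rule mult_right_mono)
    then show ?thesis by (simp add: algebra_simps power2_eq_square)
  qed
  have LD: "L * D\<^sup>2 \<le> (1 - \<eta>) * D\<^sup>2 / (2 * \<alpha>)"
  proof -
    have "L * \<alpha> \<le> (1 - \<eta>) / 2" using La L0 by (simp add: pos_le_divide_eq mult_ac)
    then have "L * \<alpha> * D\<^sup>2 \<le> (1 - \<eta>) / 2 * D\<^sup>2" by (rule mult_right_mono) simp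
    then show ?thesis using a by (simp add: field_simps)
  qed
  have am: "\<iota> * \<delta> * D \<le> D\<^sup>2 / (4 * \<alpha>) + \<alpha> * \<iota>\<^sup>2 * \<delta>\<^sup>2"
  proof -
    have "0 \<le> (D - 2 * \<alpha> * \<iota> * \<delta>)\<^sup>2" by simp
    then have "4 * \<alpha> * (\<iota> * \<delta> * D) \<le> D\<^sup>2 + 4 * \<alpha>\<^sup>2 * \<iota>\<^sup>2 * \<delta>\<^sup>2"
      by (simp add: power2_eq_square algebra_simps)
    then show ?thesis using a by (simp add: field_simps power2_eq_square)
  qed
  have sq: "\<alpha> / 4 * (D / \<alpha>)\<^sup>2 = D\<^sup>2 / (4 * \<alpha>)" using a by (simp add: power2_eq_square field_simps)
  have split: "\<eta> * D\<^sup>2 / (2 * \<alpha>) + (1 - \<eta>) * D\<^sup>2 / (2 * \<alpha>) = D\<^sup>2 / \<alpha> - D\<^sup>2 / (2 * \<alpha>)"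
    using a by (simp add: field_simps)
  have h4: "D\<^sup>2 / (2 * \<alpha>) = D\<^sup>2 / (4 * \<alpha>) + D\<^sup>2 / (4 * \<alpha>)" using a by (simp add: field_simps)
  show ?thesis unfolding p_def[symmetric] nR sq using raw eD LD am split h4 by linarith
qed

lemma step_ex:
  fixes f :: "'a::euclidean_space \<Rightarrow> real"
  assumes A: "assumptionA f gradf h L" and a: "\<alpha> > 0" and hx: "h x \<noteq> \<infinity>"
    and La: "L * \<alpha> \<le> 1 / 2"
  shows "f (prox \<alpha> h (x - \<alpha> *\<^sub>R g)) + real_of_ereal (h (prox \<alpha> h (x - \<alpha> *\<^sub>R g)))
       + \<alpha> / 4 * (norm ((1 / \<alpha>) *\<^sub>R (x - prox \<alpha> h (x - \<alpha> *\<^sub>R g))))\<^sup>2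
     \<le> f x + real_of_ereal (h x) + \<alpha> * (norm (g - gradf x))\<^sup>2"
proof -
  define p where "p = prox \<alpha> h (x - \<alpha> *\<^sub>R g)"
  define D where "D = norm (x - p)"
  define e where "e = norm (g - gradf x)"
  have D0: "D \<ge> 0" unfolding D_def by simp
  have nR: "norm ((1 / \<alpha>) *\<^sub>R (x - p)) = D / \<alpha>" unfolding D_def using a by simp
  have raw: "f p + real_of_ereal (h p) \<le> f x + real_of_ereal (h x) - D\<^sup>2 / \<alpha> + e * D + L * D\<^sup>2"
    using step_raw[OF A a hx, of g] unfolding p_def[symmetric] D_def e_def .
  have LD: "L * D\<^sup>2 \<le> D\<^sup>2 / (2 * \<alpha>)"
  proof -
    have "L * \<alpha> * D\<^sup>2 \<le> 1 / 2 * D\<^sup>2" using La by (rule mult_right_mono) simp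
    then show ?thesis using a by (simp add: field_simps)
  qed
  have am: "e * D \<le> D\<^sup>2 / (4 * \<alpha>) + \<alpha> * e\<^sup>2"
  proof -
    have "0 \<le> (D - 2 * \<alpha> * e)\<^sup>2" by simp
    then have "4 * \<alpha> * (e * D) \<le> D\<^sup>2 + 4 * \<alpha>\<^sup>2 * e\<^sup>2"
      by (simp add: power2_eq_square algebra_simps)
    then show ?thesis using a by (simp add: field_simps power2_eq_square)
  qed
  have sq: "\<alpha> / 4 * (D / \<alpha>)\<^sup>2 = D\<^sup>2 / (4 * \<alpha>)" using a by (simp add: power2_eq_square field_simps)
  have h4: "D\<^sup>2 / \<alpha> = D\<^sup>2 / (4 * \<alpha>) + D\<^sup>2 / (4 * \<alpha>) + D\<^sup>2 / (2 * \<alpha>)" using a by (simp add: field_simps)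
  show ?thesis unfolding p_def[symmetric] nR sq e_def[symmetric] using raw LD am h4 by linarith
qed

lemma Rtrue_close:
  fixes h :: "'a::euclidean_space \<Rightarrow> ereal"
  assumes H: "closed_convex_proper h" and a: "\<alpha> > 0"
  shows "norm (Rtrue \<alpha> h gradf x - (1 / \<alpha>) *\<^sub>R (x - prox \<alpha> h (x - \<alpha> *\<^sub>R g))) \<le> norm (g - gradf x)"
proof -
  have "Rtrue \<alpha> h gradf x - (1 / \<alpha>) *\<^sub>R (x - prox \<alpha> h (x - \<alpha> *\<^sub>R g))
      = (1 / \<alpha>) *\<^sub>R (prox \<alpha> h (x - \<alpha> *\<^sub>R g) - prox \<alpha> h (x - \<alpha> *\<^sub>R gradf x))"
    unfolding Rtrue_def by (simp add: algebra_simps)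
  then have "norm (Rtrue \<alpha> h gradf x - (1 / \<alpha>) *\<^sub>R (x - prox \<alpha> h (x - \<alpha> *\<^sub>R g)))
      = norm (prox \<alpha> h (x - \<alpha> *\<^sub>R g) - prox \<alpha> h (x - \<alpha> *\<^sub>R gradf x)) / \<alpha>"
    using a by simp
  also have "\<dots> \<le> norm ((x - \<alpha> *\<^sub>R g) - (x - \<alpha> *\<^sub>R gradf x)) / \<alpha>"
    using a by (intro divide_right_mono prox_nonexp[OF H a]) auto
  also have "norm ((x - \<alpha> *\<^sub>R g) - (x - \<alpha> *\<^sub>R gradf x)) = \<alpha> * norm (g - gradf x)"
  proof -
    have "(x - \<alpha> *\<^sub>R g) - (x - \<alpha> *\<^sub>R gradf x) = - (\<alpha> *\<^sub>R (g - gradf x))" by (simp add: algebra_simps)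
    then show ?thesis using a by (simp only: norm_minus_cancel norm_scaleR)
  qed
  finally show ?thesis using a by simp
qed

lemma Rtrue_bound:
  fixes f :: "'a::euclidean_space \<Rightarrow> real"
  assumes A: "assumptionA f gradf h L" and a: "\<alpha> > 0" and hx: "h x \<noteq> \<infinity>"
    and La: "L * \<alpha> \<le> 1 / 2" and m: "\<And>z. h z \<noteq> \<infinity> \<Longrightarrow> m \<le> f z + real_of_ereal (h z)"
  shows "(norm (Rtrue \<alpha> h gradf x))\<^sup>2 \<le> 4 / \<alpha> * (f x + real_of_ereal (h x) - m)"
proof -
  have H: "closed_convex_proper h" by (rule A_ccp[OF A])
  have s: "f (prox \<alpha> h (x - \<alpha> *\<^sub>R gradf x)) + real_of_ereal (h (prox \<alpha> h (x - \<alpha> *\<^sub>R gradf x)))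
       + \<alpha> / 4 * (norm (Rtrue \<alpha> h gradf x))\<^sup>2 \<le> f x + real_of_ereal (h x)"
    using step_ex[OF A a hx La, of "gradf x"] unfolding Rtrue_def by simp
  have "m \<le> f (prox \<alpha> h (x - \<alpha> *\<^sub>R gradf x)) + real_of_ereal (h (prox \<alpha> h (x - \<alpha> *\<^sub>R gradf x)))"
    by (rule m[OF prox_fin[OF H a]])
  then have "\<alpha> / 4 * (norm (Rtrue \<alpha> h gradf x))\<^sup>2 \<le> f x + real_of_ereal (h x) - m" using s by linarith
  then show ?thesis using a by (simp add: field_simps)
qed




lemma min_le_avg:
  fixes F :: "nat \<Rightarrow> real"
  assumes K: "K \<ge> 1" and S: "(\<Sum>k<K. F k) \<le> C"
  shows "Min (F ` {..<K}) \<le> C / real K"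
proof -
  have "\<And>k. k < K \<Longrightarrow> Min (F ` {..<K}) \<le> F k" by (intro Min_le) auto
  then have "(\<Sum>k<K. Min (F ` {..<K})) \<le> (\<Sum>k<K. F k)" by (intro sum_mono) auto
  then have "real K * Min (F ` {..<K}) \<le> C" using S by simp
  then show ?thesis using K by (simp add: pos_le_divide_eq mult.commute)
qed

lemma sq_sum_le: "(a + b)\<^sup>2 \<le> 2 * a\<^sup>2 + 2 * (b::real)\<^sup>2"
proof -
  have "0 \<le> (a - b)\<^sup>2" by simp
  then show ?thesis by (simp add: power2_eq_square algebra_simps)
qed

lemma part1:
  fixes f :: "'a::euclidean_space \<Rightarrow> real"
  assumes A: "assumptionA f gradf h L"
    and xs: "\<forall>k. x (Suc k) = prox \<alpha> h (x k - \<alpha> *\<^sub>R g k)"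
    and eta: "0 \<le> \<eta>" "\<eta> < 1" and io: "0 \<le> \<iota>I" and dl: "\<forall>k. 0 \<le> \<delta> k"
    and sm: "summable (\<lambda>k. (\<delta> k)\<^sup>2)"
    and a: "0 < \<alpha>" "\<alpha> \<le> (1 - \<eta>) / (2 * L)"
    and ge: "\<forall>k. norm (g k - gradf (x k)) \<le> \<eta> / 2 * norm ((1 / \<alpha>) *\<^sub>R (x k - x (Suc k))) + \<iota>I * \<delta> k"
  shows "\<exists>C::real. \<forall>K::nat. K \<ge> 1 \<longrightarrow>
              Min ((\<lambda>k. (norm (Rtrue \<alpha> h gradf (x k)))\<^sup>2) ` {..<K}) \<le> C / real K"
proof -
  have H: "closed_convex_proper h" by (rule A_ccp[OF A])
  obtain m where m: "\<And>z. h z \<noteq> \<infinity> \<Longrightarrow> m \<le> f z + real_of_ereal (h z)" using A_lower[OF A] by blast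
  define \<Phi> where "\<Phi> = (\<lambda>k. f (x k) + real_of_ereal (h (x k)))"
  define R where "R = (\<lambda>k. (1 / \<alpha>) *\<^sub>R (x k - x (Suc k)))"
  define S where "S = (\<Sum>k. (\<delta> k)\<^sup>2)"
  have fin: "h (x (Suc k)) \<noteq> \<infinity>" for k using xs prox_fin[OF H a(1)] by metis
  have desc: "\<Phi> (Suc (Suc k)) + \<alpha> / 4 * (norm (R (Suc k)))\<^sup>2 \<le> \<Phi> (Suc k) + \<alpha> * \<iota>I\<^sup>2 * (\<delta> (Suc k))\<^sup>2" for k
    using step_fs[OF A a(1) fin[of k] eta(1) a(2) io dl[rule_format, of "Suc k"], of "g (Suc k)"]
      ge[rule_format, of "Suc k"] xs
    unfolding \<Phi>_def R_def by metis
  have tel: "\<Phi> (Suc n) + \<alpha> / 4 * (\<Sum>j<n. (norm (R (Suc j)))\<^sup>2) \<le> \<Phi> 1 + \<alpha> * \<iota>I\<^sup>2 * (\<Sum>j<n. (\<delta> (Suc j))\<^sup>2)" for n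
  proof (induction n)
    case 0 then show ?case by simp
  next
    case (Suc n)
    then show ?case using desc[of n] by (simp add: algebra_simps)
  qed
  have dS: "(\<Sum>j<n. (\<delta> (Suc j))\<^sup>2) \<le> S" for n
  proof -
    have "(\<Sum>k<Suc n. (\<delta> k)\<^sup>2) = (\<delta> 0)\<^sup>2 + (\<Sum>j<n. (\<delta> (Suc j))\<^sup>2)"
      by (rule sum.lessThan_Suc_shift)
    then have "(\<Sum>j<n. (\<delta> (Suc j))\<^sup>2) \<le> (\<Sum>k<Suc n. (\<delta> k)\<^sup>2)" by simp
    also have "\<dots> \<le> S" unfolding S_def by (rule sum_le_suminf[OF sm]) auto
    finally show ?thesis .
  qed
  define B where "B = 4 / \<alpha> * (\<Phi> 1 - m + \<alpha> * \<iota>I\<^sup>2 * S)"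
  have RB: "(\<Sum>j<n. (norm (R (Suc j)))\<^sup>2) \<le> B" for n
  proof -
    have "m \<le> \<Phi> (Suc n)" unfolding \<Phi>_def by (rule m[OF fin])
    moreover have "\<alpha> * \<iota>I\<^sup>2 * (\<Sum>j<n. (\<delta> (Suc j))\<^sup>2) \<le> \<alpha> * \<iota>I\<^sup>2 * S"
      using dS[of n] a(1) by (intro mult_left_mono) auto
    ultimately have "\<alpha> / 4 * (\<Sum>j<n. (norm (R (Suc j)))\<^sup>2) \<le> \<Phi> 1 - m + \<alpha> * \<iota>I\<^sup>2 * S"
      using tel[of n] by linarith
    then show ?thesis unfolding B_def using a(1) by (simp add: field_simps)
  qed
  have Tk: "(norm (Rtrue \<alpha> h gradf (x k)))\<^sup>2 \<le> 8 * (norm (R k))\<^sup>2 + 2 * \<iota>I\<^sup>2 * (\<delta> k)\<^sup>2" for k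
  proof -
    have c: "norm (Rtrue \<alpha> h gradf (x k) - R k) \<le> norm (g k - gradf (x k))"
      using Rtrue_close[OF H a(1), of gradf "x k" "g k"] xs unfolding R_def by metis
    have "norm (Rtrue \<alpha> h gradf (x k)) \<le> norm (R k) + norm (Rtrue \<alpha> h gradf (x k) - R k)"
      by (metis add.commute diff_add_cancel norm_triangle_ineq)
    also have "\<dots> \<le> norm (R k) + (\<eta> / 2 * norm (R k) + \<iota>I * \<delta> k)"
      using c ge unfolding R_def by (meson add_left_mono order_trans)
    also have "\<dots> \<le> 2 * norm (R k) + \<iota>I * \<delta> k"
    proof -
      have "\<eta> / 2 * norm (R k) \<le> 1 * norm (R k)" using eta by (intro mult_right_mono) auto
      then show ?thesis by simp
    qed
    finally have t: "norm (Rtrue \<alpha> h gradf (x k)) \<le> 2 * norm (R k) + \<iota>I * \<delta> k" .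
    have "(norm (Rtrue \<alpha> h gradf (x k)))\<^sup>2 \<le> (2 * norm (R k) + \<iota>I * \<delta> k)\<^sup>2"
      using t by (intro power_mono) auto
    also have "\<dots> \<le> 2 * (2 * norm (R k))\<^sup>2 + 2 * (\<iota>I * \<delta> k)\<^sup>2" by (rule sq_sum_le)
    finally show ?thesis by (simp add: power_mult_distrib)
  qed
  define C where "C = (norm (Rtrue \<alpha> h gradf (x 0)))\<^sup>2 + 8 * B + 2 * \<iota>I\<^sup>2 * S"
  show ?thesis
  proof (intro exI allI impI)
    fix K :: nat assume K: "K \<ge> 1"
    then obtain n where n: "K = Suc n" by (cases K) auto
    have "(\<Sum>k<K. (norm (Rtrue \<alpha> h gradf (x k)))\<^sup>2)
        = (norm (Rtrue \<alpha> h gradf (x 0)))\<^sup>2 + (\<Sum>j<n. (norm (Rtrue \<alpha> h gradf (x (Suc j))))\<^sup>2)"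
      unfolding n by (rule sum.lessThan_Suc_shift)
    also have "(\<Sum>j<n. (norm (Rtrue \<alpha> h gradf (x (Suc j))))\<^sup>2)
        \<le> (\<Sum>j<n. 8 * (norm (R (Suc j)))\<^sup>2 + 2 * \<iota>I\<^sup>2 * (\<delta> (Suc j))\<^sup>2)"
      by (intro sum_mono Tk)
    also have "\<dots> = 8 * (\<Sum>j<n. (norm (R (Suc j)))\<^sup>2) + 2 * \<iota>I\<^sup>2 * (\<Sum>j<n. (\<delta> (Suc j))\<^sup>2)"
      by (simp add: sum.distrib sum_distrib_left)
    also have "\<dots> \<le> 8 * B + 2 * \<iota>I\<^sup>2 * S"
      using RB[of n] dS[of n] by (intro add_mono mult_left_mono) auto
    finally have "(\<Sum>k<K. (norm (Rtrue \<alpha> h gradf (x k)))\<^sup>2) \<le> C" unfolding C_def by simp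
    then show "Min ((\<lambda>k. (norm (Rtrue \<alpha> h gradf (x k)))\<^sup>2) ` {..<K}) \<le> C / real K"
      by (rule min_le_avg[OF K])
  qed
qed




lemma step0:
  fixes f :: "'a::euclidean_space \<Rightarrow> real"
  assumes A: "assumptionA f gradf h L" and a: "\<alpha> > 0"
  shows "f (prox \<alpha> h (x - \<alpha> *\<^sub>R g)) + real_of_ereal (h (prox \<alpha> h (x - \<alpha> *\<^sub>R g)))
     \<le> f (prox \<alpha> h (x - \<alpha> *\<^sub>R gradf x)) + real_of_ereal (h (prox \<alpha> h (x - \<alpha> *\<^sub>R gradf x)))
       + (norm (x - \<alpha> *\<^sub>R gradf x - prox \<alpha> h (x - \<alpha> *\<^sub>R gradf x))
          + \<alpha> * norm (gradf (prox \<alpha> h (x - \<alpha> *\<^sub>R gradf x))) + 2 * \<alpha> + L * \<alpha>\<^sup>2)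
         * (1 + (norm (g - gradf x))\<^sup>2)"
proof -
  have H: "closed_convex_proper h" by (rule A_ccp[OF A])
  have L0: "L > 0" by (rule A_L[OF A])
  define p where "p = prox \<alpha> h (x - \<alpha> *\<^sub>R g)"
  define q where "q = prox \<alpha> h (x - \<alpha> *\<^sub>R gradf x)"
  define e where "e = norm (g - gradf x)"
  define W where "W = norm (x - \<alpha> *\<^sub>R gradf x - q)"
  define G where "G = norm (gradf q)"
  have e0: "0 \<le> e" "0 \<le> W" "0 \<le> G" unfolding e_def W_def G_def by auto
  have fq: "h q \<noteq> \<infinity>" unfolding q_def by (rule prox_fin[OF H a])
  have ed: "(x - \<alpha> *\<^sub>R g) - (x - \<alpha> *\<^sub>R gradf x) = - (\<alpha> *\<^sub>R (g - gradf x))" by (simp add: algebra_simps)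
  have pq: "norm (p - q) \<le> \<alpha> * e"
  proof -
    have "norm (p - q) \<le> norm ((x - \<alpha> *\<^sub>R g) - (x - \<alpha> *\<^sub>R gradf x))"
      unfolding p_def q_def by (rule prox_nonexp[OF H a])
    also have "\<dots> = \<alpha> * e" unfolding ed e_def using a by (simp only: norm_minus_cancel norm_scaleR)
    finally show ?thesis .
  qed
  have vi: "real_of_ereal (h p) + ((x - \<alpha> *\<^sub>R g - p) \<bullet> (q - p)) / \<alpha> \<le> real_of_ereal (h q)"
    using prox_vi[OF H a fq, of "x - \<alpha> *\<^sub>R g"] unfolding p_def .
  have nx: "norm (x - \<alpha> *\<^sub>R g - p) \<le> W + 2 * \<alpha> * e"
  proof -
    have eq: "x - \<alpha> *\<^sub>R g - p = (x - \<alpha> *\<^sub>R gradf x - q) + (- (\<alpha> *\<^sub>R (g - gradf x))) + (q - p)"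
      by (simp add: algebra_simps)
    have t1: "norm ((x - \<alpha> *\<^sub>R gradf x - q) + (- (\<alpha> *\<^sub>R (g - gradf x))) + (q - p))
       \<le> norm ((x - \<alpha> *\<^sub>R gradf x - q) + (- (\<alpha> *\<^sub>R (g - gradf x)))) + norm (q - p)"
      by (rule norm_triangle_ineq)
    have t2: "norm ((x - \<alpha> *\<^sub>R gradf x - q) + (- (\<alpha> *\<^sub>R (g - gradf x))))
       \<le> norm (x - \<alpha> *\<^sub>R gradf x - q) + norm (- (\<alpha> *\<^sub>R (g - gradf x)))"
      by (rule norm_triangle_ineq)
    have t3: "norm (- (\<alpha> *\<^sub>R (g - gradf x))) = \<alpha> * e" unfolding e_def using a
      by (simp only: norm_minus_cancel norm_scaleR)
    have t4: "norm (q - p) \<le> \<alpha> * e" using pq by (simp add: norm_minus_commute)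
    show ?thesis unfolding eq W_def using t1 t2 t3 t4 by linarith
  qed
  have "- ((x - \<alpha> *\<^sub>R g - p) \<bullet> (q - p)) \<le> norm (x - \<alpha> *\<^sub>R g - p) * norm (q - p)"
    using Cauchy_Schwarz_ineq2[of "x - \<alpha> *\<^sub>R g - p" "q - p"] by linarith
  also have "\<dots> \<le> (W + 2 * \<alpha> * e) * (\<alpha> * e)"
    using nx pq e0 a by (intro mult_mono) (auto simp: norm_minus_commute)
  finally have i1: "- ((x - \<alpha> *\<^sub>R g - p) \<bullet> (q - p)) \<le> (W + 2 * \<alpha> * e) * (\<alpha> * e)" .
  have "(- ((x - \<alpha> *\<^sub>R g - p) \<bullet> (q - p))) / \<alpha> \<le> (W + 2 * \<alpha> * e) * (\<alpha> * e) / \<alpha>"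
    using i1 a by (intro divide_right_mono) auto
  also have "\<dots> = W * e + 2 * \<alpha> * e\<^sup>2" using a by (simp add: field_simps power2_eq_square)
  finally have i2: "(- ((x - \<alpha> *\<^sub>R g - p) \<bullet> (q - p))) / \<alpha> \<le> W * e + 2 * \<alpha> * e\<^sup>2" .
  have m1: "(- ((x - \<alpha> *\<^sub>R g - p) \<bullet> (q - p))) / \<alpha> = - (((x - \<alpha> *\<^sub>R g - p) \<bullet> (q - p)) / \<alpha>)" by simp
  have hb: "real_of_ereal (h p) \<le> real_of_ereal (h q) + W * e + 2 * \<alpha> * e\<^sup>2" using vi i2 m1 by linarith
  have de: "f p \<le> f q + gradf q \<bullet> (p - q) + L * (norm (p - q))\<^sup>2" by (rule descent[OF A])
  have "gradf q \<bullet> (p - q) \<le> G * norm (p - q)" unfolding G_def by (rule norm_cauchy_schwarz)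
  also have "\<dots> \<le> G * (\<alpha> * e)" using pq e0 by (intro mult_left_mono) auto
  finally have g1: "gradf q \<bullet> (p - q) \<le> G * (\<alpha> * e)" .
  have "(norm (p - q))\<^sup>2 \<le> (\<alpha> * e)\<^sup>2" using pq by (intro power_mono) auto
  then have g2: "L * (norm (p - q))\<^sup>2 \<le> L * \<alpha>\<^sup>2 * e\<^sup>2" using L0 by (simp add: power_mult_distrib mult_left_mono)
  have tot: "f p + real_of_ereal (h p) \<le> f q + real_of_ereal (h q) + (W + \<alpha> * G) * e + (2 * \<alpha> + L * \<alpha>\<^sup>2) * e\<^sup>2"
    using hb de g1 g2 by (simp add: algebra_simps)
  have ee: "e \<le> 1 + e\<^sup>2"
  proof -
    have "0 \<le> (e - 1)\<^sup>2" by simp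
    then have "2 * e \<le> 1 + e\<^sup>2" by (simp add: power2_eq_square algebra_simps)
    then show ?thesis using e0 by linarith
  qed
  have c1: "(W + \<alpha> * G) * e \<le> (W + \<alpha> * G) * (1 + e\<^sup>2)" using ee e0 a by (intro mult_left_mono) auto
  have c2: "(2 * \<alpha> + L * \<alpha>\<^sup>2) * e\<^sup>2 \<le> (2 * \<alpha> + L * \<alpha>\<^sup>2) * (1 + e\<^sup>2)" using a L0 by (intro mult_left_mono) auto
  have "f p + real_of_ereal (h p) \<le> f q + real_of_ereal (h q) + (W + \<alpha> * G + 2 * \<alpha> + L * \<alpha>\<^sup>2) * (1 + e\<^sup>2)"
    using tot c1 c2 by (simp add: algebra_simps)
  then show ?thesis unfolding p_def q_def e_def W_def G_def .
qed

lemma A_contf: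
  assumes A: "assumptionA f gradf h L"
  shows "continuous_on UNIV f" "continuous_on UNIV gradf"
proof -
  have "\<And>p. (f has_derivative (\<lambda>v. gradf p \<bullet> v)) (at p)" using A unfolding assumptionA_def by auto
  then have "\<And>p. isCont f p" using has_derivative_continuous by blast
  then show "continuous_on UNIV f" by (simp add: continuous_at_imp_continuous_on)
  show "continuous_on UNIV gradf" using A unfolding assumptionA_def by auto
qed

lemma Rtrue_cont:
  fixes h :: "'a::euclidean_space \<Rightarrow> ereal"
  assumes H: "closed_convex_proper h" and a: "\<alpha> > 0" and G: "continuous_on UNIV gradf"
  shows "continuous_on UNIV (Rtrue \<alpha> h gradf)"
proof -
  have c1: "continuous_on UNIV (\<lambda>y. y - \<alpha> *\<^sub>R gradf y)" using G by (intro continuous_intros)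
  have "continuous_on UNIV (prox \<alpha> h \<circ> (\<lambda>y. y - \<alpha> *\<^sub>R gradf y))"
    by (rule continuous_on_compose[OF c1 continuous_on_subset[OF prox_cont[OF H a]]]) simp
  then have c2: "continuous_on UNIV (\<lambda>y. prox \<alpha> h (y - \<alpha> *\<^sub>R gradf y))" by (simp add: o_def)
  show ?thesis unfolding Rtrue_def[abs_def] by (intro continuous_intros c2)
qed



lemma ennreal_min_avg:
  fixes F :: "nat \<Rightarrow> ennreal"
  assumes K: "K \<ge> 1" and C0: "0 \<le> C" and S: "(\<Sum>k<K. F k) \<le> ennreal C"
  shows "Min (F ` {..<K}) \<le> ennreal (C / real K)"
proof -
  have "\<And>k. k < K \<Longrightarrow> Min (F ` {..<K}) \<le> F k" by (intro Min_le) auto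
  then have "(\<Sum>k<K. Min (F ` {..<K})) \<le> (\<Sum>k<K. F k)" by (intro sum_mono) auto
  then have le: "of_nat K * Min (F ` {..<K}) \<le> ennreal C" using S by simp
  show ?thesis
  proof (cases "Min (F ` {..<K}) = \<infinity>")
    case True
    then have "of_nat K * Min (F ` {..<K}) = \<infinity>" using K by (simp add: ennreal_mult_top)
    then show ?thesis using le by (simp add: top_unique)
  next
    case False
    define r where "r = enn2real (Min (F ` {..<K}))"
    have r: "Min (F ` {..<K}) = ennreal r" "0 \<le> r" unfolding r_def using False
      by (auto simp: ennreal_enn2real_if)
    have "ennreal (real K * r) \<le> ennreal C" using le r by (simp add: ennreal_mult ennreal_of_nat_eq_real_of_nat)
    then have "real K * r \<le> C" using C0 by (simp add: ennreal_le_iff)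
    then have "r \<le> C / real K" using K by (simp add: pos_le_divide_eq mult.commute)
    then show ?thesis using r by (simp add: ennreal_leI)
  qed
qed


lemma enn_lin:
  assumes "0 \<le> a" "0 \<le> b" "0 \<le> c"
  shows "ennreal (a + b * c) = ennreal a + ennreal b * ennreal c"
proof -
  have "ennreal (a + b * c) = ennreal a + ennreal (b * c)" using assms by (intro ennreal_plus) auto
  also have "ennreal (b * c) = ennreal b * ennreal c" using assms by (intro ennreal_mult) auto
  finally show ?thesis .
qed

lemma H1:
  assumes "ennreal a + ennreal b * ennreal c \<le> ennreal d + ennreal e * ennreal f"
    and "0 \<le> a" "0 \<le> b" "0 \<le> c" "0 \<le> d" "0 \<le> e" "0 \<le> f"
  shows "a + b * c \<le> d + e * f"
proof -
  have le: "ennreal (a + b * c) \<le> ennreal (d + e * f)"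
    using assms(1) unfolding enn_lin[OF assms(2,3,4)] enn_lin[OF assms(5,6,7)] .
  have "0 \<le> d + e * f" using assms by simp
  then show ?thesis using le ennreal_le_iff by blast
qed

lemma H2:
  assumes "ennreal a \<le> ennreal b * ennreal c + ennreal d"
    and "0 \<le> a" "0 \<le> b" "0 \<le> c" "0 \<le> d"
  shows "a \<le> b * c + d"
proof -
  have le: "ennreal a \<le> ennreal (d + b * c)"
    using assms(1) unfolding enn_lin[OF assms(5,3,4)] by (simp add: add.commute)
  have "0 \<le> d + b * c" using assms by simp
  then have "a \<le> d + b * c" using le ennreal_le_iff by blast
  then show ?thesis by simp
qed

lemma H3:
  assumes "ennreal a \<le> 2 * ennreal b + 2 * ennreal c"
    and "0 \<le> a" "0 \<le> b" "0 \<le> c"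
  shows "a \<le> 2 * b + 2 * c"
proof -
  have "ennreal (2 * b + 2 * c) = 2 * ennreal b + 2 * ennreal c"
    using assms by (simp add: ennreal_plus ennreal_mult)
  then have le: "ennreal a \<le> ennreal (2 * b + 2 * c)" using assms(1) by simp
  have "0 \<le> 2 * b + 2 * c" using assms by simp
  then show ?thesis using le ennreal_le_iff by blast
qed

lemma part2:
  fixes f :: "'a::euclidean_space \<Rightarrow> real" and x g :: "nat \<Rightarrow> 'w \<Rightarrow> 'a"
  assumes A: "assumptionA f gradf h L"
    and P: "prob_space M"
    and gm: "\<forall>k. g k \<in> borel_measurable M"
    and xz: "\<forall>\<omega>\<in>space M. x 0 \<omega> = xz"
    and xs: "\<forall>k. \<forall>\<omega>\<in>space M. x (Suc k) \<omega> = prox \<alpha> h (x k \<omega> - \<alpha> *\<^sub>R g k \<omega>)"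
    and xi: "\<forall>k. integrable M (x k)"
    and eta: "0 \<le> \<eta>" "\<eta> < 1" and io: "0 \<le> \<iota>I" and dl: "\<forall>k. 0 \<le> \<delta> k"
    and sm: "summable (\<lambda>k. (\<delta> k)\<^sup>2)"
    and a: "0 < \<alpha>" "\<alpha> \<le> (1 - \<eta>) / (2 * L)"
    and cond: "\<forall>k. AE \<omega> in M.
          nn_cond_exp M (gen_sigma M g k) (\<lambda>\<omega>. ennreal ((norm (g k \<omega> - gradf (x k \<omega>)))\<^sup>2)) \<omega>
          \<le> ennreal (\<eta>\<^sup>2 / 4 * (norm (vec_cond_exp M (gen_sigma M g k)
                          (\<lambda>\<omega>. (1 / \<alpha>) *\<^sub>R (x k \<omega> - x (Suc k) \<omega>)) \<omega>))\<^sup>2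
                     + \<iota>I\<^sup>2 * (\<delta> k)\<^sup>2)"
  shows "\<exists>C::real. \<forall>K::nat. K \<ge> 1 \<longrightarrow>
              Min ((\<lambda>k. \<integral>\<^sup>+\<omega>. ennreal ((norm (Rtrue \<alpha> h gradf (x k \<omega>)))\<^sup>2) \<partial>M) ` {..<K})
                \<le> ennreal (C / real K)"
proof -
  interpret P: prob_space M by fact
  have H: "closed_convex_proper h" by (rule A_ccp[OF A])
  have L0: "L > 0" by (rule A_L[OF A])
  have La: "L * \<alpha> \<le> 1 / 2"
  proof -
    have "\<alpha> * (2 * L) \<le> 1 - \<eta>" using a(2) L0 by (simp add: pos_le_divide_eq)
    then show ?thesis using eta by (simp add: algebra_simps)
  qed
  obtain m where m: "\<And>z. h z \<noteq> \<infinity> \<Longrightarrow> m \<le> f z + real_of_ereal (h z)" using A_lower[OF A] by blast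
  have cf: "continuous_on UNIV f" "continuous_on UNIV gradf" using A_contf[OF A] by auto
  have fb[measurable]: "f \<in> borel_measurable borel" using cf(1) by (rule borel_measurable_continuous_onI)
  have gb[measurable]: "gradf \<in> borel_measurable borel" using cf(2) by (rule borel_measurable_continuous_onI)
  have Tb[measurable]: "Rtrue \<alpha> h gradf \<in> borel_measurable borel"
    by (rule borel_measurable_continuous_onI[OF Rtrue_cont[OF H a(1) cf(2)]])
  have HPb[measurable]: "(\<lambda>v. real_of_ereal (h (prox \<alpha> h v))) \<in> borel_measurable borel"
    by (rule borel_measurable_continuous_onI[OF hprox_cont[OF H a(1)]])
  have Pb[measurable]: "prox \<alpha> h \<in> borel_measurable borel"
    by (rule borel_measurable_continuous_onI[OF prox_cont[OF H a(1)]])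
  have xm[measurable]: "x k \<in> borel_measurable M" for k using xi borel_measurable_integrable by blast
  have gm'[measurable]: "g k \<in> borel_measurable M" for k using gm by auto
  define e where "e = (\<lambda>k \<omega>. g k \<omega> - gradf (x k \<omega>))"
  define R where "R = (\<lambda>k \<omega>. (1 / \<alpha>) *\<^sub>R (x k \<omega> - x (Suc k) \<omega>))"
  define T where "T = (\<lambda>k \<omega>. Rtrue \<alpha> h gradf (x k \<omega>))"
  define \<psi> where "\<psi> = (\<lambda>k \<omega>. f (x k \<omega>) + real_of_ereal (h (x k \<omega>)) - m)"
  define EE where "EE = (\<lambda>k. \<integral>\<^sup>+\<omega>. ennreal ((norm (e k \<omega>))\<^sup>2) \<partial>M)"
  define ER where "ER = (\<lambda>k. \<integral>\<^sup>+\<omega>. ennreal ((norm (R k \<omega>))\<^sup>2) \<partial>M)"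
  define ET where "ET = (\<lambda>k. \<integral>\<^sup>+\<omega>. ennreal ((norm (T k \<omega>))\<^sup>2) \<partial>M)"
  define EP where "EP = (\<lambda>k. \<integral>\<^sup>+\<omega>. ennreal (\<psi> k \<omega>) \<partial>M)"
  have em[measurable]: "e k \<in> borel_measurable M" for k unfolding e_def by measurable
  have Rm[measurable]: "R k \<in> borel_measurable M" for k unfolding R_def by measurable
  have Tm[measurable]: "T k \<in> borel_measurable M" for k unfolding T_def by measurable
  have \<psi>m[measurable]: "\<psi> (Suc k) \<in> borel_measurable M" for k
  proof -
    have eq: "\<And>\<omega>. \<omega> \<in> space M \<Longrightarrow> \<psi> (Suc k) \<omega> = f (prox \<alpha> h (x k \<omega> - \<alpha> *\<^sub>R g k \<omega>))
        + real_of_ereal (h (prox \<alpha> h (x k \<omega> - \<alpha> *\<^sub>R g k \<omega>))) - m"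
      unfolding \<psi>_def using xs by simp
    have "(\<lambda>\<omega>. f (prox \<alpha> h (x k \<omega> - \<alpha> *\<^sub>R g k \<omega>))
        + real_of_ereal (h (prox \<alpha> h (x k \<omega> - \<alpha> *\<^sub>R g k \<omega>))) - m) \<in> borel_measurable M"
      by measurable
    then show ?thesis using measurable_cong[where M=M and f="\<psi> (Suc k)", OF eq] by blast
  qed
  have fin: "\<omega> \<in> space M \<Longrightarrow> h (x (Suc k) \<omega>) \<noteq> \<infinity>" for k \<omega> using xs prox_fin[OF H a(1)] by metis
  have \<psi>0: "\<omega> \<in> space M \<Longrightarrow> 0 \<le> \<psi> (Suc k) \<omega>" for k \<omega> unfolding \<psi>_def using m[OF fin] by simp
  have Ri: "integrable M (R k)" for k unfolding R_def using xi by (intro integrable_scaleR_right integrable_diff) auto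
  have pwRT: "\<forall>\<omega>\<in>space M. norm (T k \<omega> - R k \<omega>) \<le> norm (e k \<omega>)" for k
  proof
    fix \<omega> assume \<omega>: "\<omega> \<in> space M"
    have xe: "x (Suc k) \<omega> = prox \<alpha> h (x k \<omega> - \<alpha> *\<^sub>R g k \<omega>)" using xs \<omega> by blast
    show "norm (T k \<omega> - R k \<omega>) \<le> norm (e k \<omega>)"
      unfolding T_def R_def e_def xe by (rule Rtrue_close[OF H a(1)])
  qed
  have c0: "0 \<le> \<iota>I\<^sup>2 * (\<delta> k)\<^sup>2" for k by simp
  have ab: "EE k \<le> ennreal (\<eta>\<^sup>2 / (2 - \<eta>\<^sup>2) + 1) * ET k + ennreal (2 * (\<iota>I\<^sup>2 * (\<delta> k)\<^sup>2) / (2 - \<eta>\<^sup>2))"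
     "EE k \<le> ennreal (\<eta>\<^sup>2 / 4) * ER k + ennreal (\<iota>I\<^sup>2 * (\<delta> k)\<^sup>2)" for k
  proof -
    have sub: "sigma_finite_subalgebra M (gen_sigma M g k)" by (rule gen_sigma_sub[OF P gm])
    have cnd: "AE \<omega> in M. nn_cond_exp M (gen_sigma M g k) (\<lambda>\<omega>. ennreal ((norm (e k \<omega>))\<^sup>2)) \<omega>
                 \<le> ennreal (\<eta>\<^sup>2 / 4 * (norm (vec_cond_exp M (gen_sigma M g k) (R k) \<omega>))\<^sup>2 + \<iota>I\<^sup>2 * (\<delta> k)\<^sup>2)"
      using cond unfolding e_def R_def by blast
    note r = cond_ab[OF P sub Ri em Tm pwRT cnd eta c0]
    show "EE k \<le> ennreal (\<eta>\<^sup>2 / (2 - \<eta>\<^sup>2) + 1) * ET k + ennreal (2 * (\<iota>I\<^sup>2 * (\<delta> k)\<^sup>2) / (2 - \<eta>\<^sup>2))"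
      using r(1) unfolding EE_def ET_def .
    show "EE k \<le> ennreal (\<eta>\<^sup>2 / 4) * ER k + ennreal (\<iota>I\<^sup>2 * (\<delta> k)\<^sup>2)"
      using r(2) unfolding EE_def ER_def .
  qed
  have dc: "EP (Suc (Suc k)) + ennreal (\<alpha> / 4) * ER (Suc k) \<le> EP (Suc k) + ennreal \<alpha> * EE (Suc k)" for k
  proof -
    have pw: "ennreal (\<psi> (Suc (Suc k)) \<omega>) + ennreal (\<alpha> / 4) * ennreal ((norm (R (Suc k) \<omega>))\<^sup>2)
        \<le> ennreal (\<psi> (Suc k) \<omega>) + ennreal \<alpha> * ennreal ((norm (e (Suc k) \<omega>))\<^sup>2)" if \<omega>: "\<omega> \<in> space M" for \<omega>
    proof -
      have xe: "x (Suc (Suc k)) \<omega> = prox \<alpha> h (x (Suc k) \<omega> - \<alpha> *\<^sub>R g (Suc k) \<omega>)" using xs \<omega> by blast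
      note st = step_ex[OF A a(1) fin[OF \<omega>, of k] La, of "g (Suc k) \<omega>"]
      have s: "\<psi> (Suc (Suc k)) \<omega> + \<alpha> / 4 * (norm (R (Suc k) \<omega>))\<^sup>2 \<le> \<psi> (Suc k) \<omega> + \<alpha> * (norm (e (Suc k) \<omega>))\<^sup>2"
        unfolding \<psi>_def R_def e_def xe using st by linarith
      have n1: "0 \<le> \<psi> (Suc (Suc k)) \<omega>" "0 \<le> \<psi> (Suc k) \<omega>" using \<psi>0 \<omega> by auto
      have le: "ennreal (\<psi> (Suc (Suc k)) \<omega> + \<alpha> / 4 * (norm (R (Suc k) \<omega>))\<^sup>2)
          \<le> ennreal (\<psi> (Suc k) \<omega> + \<alpha> * (norm (e (Suc k) \<omega>))\<^sup>2)" using s by (rule ennreal_leI)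
      have E1: "ennreal (\<psi> (Suc (Suc k)) \<omega> + \<alpha> / 4 * (norm (R (Suc k) \<omega>))\<^sup>2)
          = ennreal (\<psi> (Suc (Suc k)) \<omega>) + ennreal (\<alpha> / 4) * ennreal ((norm (R (Suc k) \<omega>))\<^sup>2)"
        using n1 a(1) by (intro enn_lin) auto
      have E2: "ennreal (\<psi> (Suc k) \<omega> + \<alpha> * (norm (e (Suc k) \<omega>))\<^sup>2)
          = ennreal (\<psi> (Suc k) \<omega>) + ennreal \<alpha> * ennreal ((norm (e (Suc k) \<omega>))\<^sup>2)"
        using n1 a(1) by (intro enn_lin) auto
      show ?thesis using le unfolding E1 E2 .
    qed
    have "EP (Suc (Suc k)) + ennreal (\<alpha> / 4) * ER (Suc k)
        = (\<integral>\<^sup>+\<omega>. ennreal (\<psi> (Suc (Suc k)) \<omega>) + ennreal (\<alpha> / 4) * ennreal ((norm (R (Suc k) \<omega>))\<^sup>2) \<partial>M)"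
      unfolding EP_def ER_def by (simp add: nn_integral_add nn_integral_cmult)
    also have "\<dots> \<le> (\<integral>\<^sup>+\<omega>. ennreal (\<psi> (Suc k) \<omega>) + ennreal \<alpha> * ennreal ((norm (e (Suc k) \<omega>))\<^sup>2) \<partial>M)"
      by (rule nn_integral_mono) (rule pw)
    also have "\<dots> = EP (Suc k) + ennreal \<alpha> * EE (Suc k)"
      unfolding EP_def EE_def by (simp add: nn_integral_add nn_integral_cmult)
    finally show ?thesis .
  qed
  have dT: "ET (Suc k) \<le> ennreal (4 / \<alpha>) * EP (Suc k)" for k
  proof -
    have "ET (Suc k) \<le> (\<integral>\<^sup>+\<omega>. ennreal (4 / \<alpha>) * ennreal (\<psi> (Suc k) \<omega>) \<partial>M)"
      unfolding ET_def
    proof (rule nn_integral_mono)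
      fix \<omega> assume \<omega>: "\<omega> \<in> space M"
      have "(norm (T (Suc k) \<omega>))\<^sup>2 \<le> 4 / \<alpha> * \<psi> (Suc k) \<omega>"
        unfolding T_def \<psi>_def using Rtrue_bound[OF A a(1) fin[OF \<omega>] La m] by simp
      then have "ennreal ((norm (T (Suc k) \<omega>))\<^sup>2) \<le> ennreal (4 / \<alpha> * \<psi> (Suc k) \<omega>)" by (rule ennreal_leI)
      moreover have "ennreal (4 / \<alpha> * \<psi> (Suc k) \<omega>) = ennreal (4 / \<alpha>) * ennreal (\<psi> (Suc k) \<omega>)"
        using a(1) \<psi>0[OF \<omega>] by (intro ennreal_mult) auto
      ultimately show "ennreal ((norm (T (Suc k) \<omega>))\<^sup>2) \<le> ennreal (4 / \<alpha>) * ennreal (\<psi> (Suc k) \<omega>)"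
        by simp
    qed
    also have "\<dots> = ennreal (4 / \<alpha>) * EP (Suc k)" unfolding EP_def by (simp add: nn_integral_cmult)
    finally show ?thesis .
  qed
  have sq2: "(norm u)\<^sup>2 \<le> 2 * (norm v)\<^sup>2 + 2 * (norm w)\<^sup>2" if uv: "norm (u - v) \<le> norm w" for u v w :: 'a
  proof -
    have "norm u \<le> norm v + norm (u - v)" using norm_triangle_ineq[of v "u - v"] by simp
    then have "norm u \<le> norm v + norm w" using uv by linarith
    then have "(norm u)\<^sup>2 \<le> (norm v + norm w)\<^sup>2" by (intro power_mono) auto
    also have "\<dots> \<le> 2 * (norm v)\<^sup>2 + 2 * (norm w)\<^sup>2" by (rule sq_sum_le)
    finally show "(norm u)\<^sup>2 \<le> 2 * (norm v)\<^sup>2 + 2 * (norm w)\<^sup>2" .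
  qed
  have int2: "(\<integral>\<^sup>+\<omega>. ennreal ((norm (u \<omega>))\<^sup>2) \<partial>M)
      \<le> 2 * (\<integral>\<^sup>+\<omega>. ennreal ((norm (v \<omega>))\<^sup>2) \<partial>M) + 2 * (\<integral>\<^sup>+\<omega>. ennreal ((norm (w \<omega>))\<^sup>2) \<partial>M)"
    if "\<forall>\<omega>\<in>space M. norm (u \<omega> - v \<omega>) \<le> norm (w \<omega>)" and [measurable]: "v \<in> borel_measurable M" "w \<in> borel_measurable M"
    for u v w :: "'w \<Rightarrow> 'a"
  proof -
    have "(\<integral>\<^sup>+\<omega>. ennreal ((norm (u \<omega>))\<^sup>2) \<partial>M)
        \<le> (\<integral>\<^sup>+\<omega>. 2 * ennreal ((norm (v \<omega>))\<^sup>2) + 2 * ennreal ((norm (w \<omega>))\<^sup>2) \<partial>M)"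
    proof (rule nn_integral_mono)
      fix \<omega> assume "\<omega> \<in> space M"
      then have "(norm (u \<omega>))\<^sup>2 \<le> 2 * (norm (v \<omega>))\<^sup>2 + 2 * (norm (w \<omega>))\<^sup>2" using that(1) sq2 by blast
      then have "ennreal ((norm (u \<omega>))\<^sup>2) \<le> ennreal (2 * (norm (v \<omega>))\<^sup>2 + 2 * (norm (w \<omega>))\<^sup>2)" by (rule ennreal_leI)
      then show "ennreal ((norm (u \<omega>))\<^sup>2) \<le> 2 * ennreal ((norm (v \<omega>))\<^sup>2) + 2 * ennreal ((norm (w \<omega>))\<^sup>2)"
        by (simp add: ennreal_plus ennreal_mult)
    qed
    also have "\<dots> = 2 * (\<integral>\<^sup>+\<omega>. ennreal ((norm (v \<omega>))\<^sup>2) \<partial>M) + 2 * (\<integral>\<^sup>+\<omega>. ennreal ((norm (w \<omega>))\<^sup>2) \<partial>M)"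
      by (simp add: nn_integral_add nn_integral_cmult)
    finally show ?thesis .
  qed
  have dR: "ER k \<le> 2 * ET k + 2 * EE k" for k
    unfolding ER_def ET_def EE_def
    by (rule int2) (use pwRT in \<open>auto simp: norm_minus_commute\<close>)
  have dT2: "ET k \<le> 2 * ER k + 2 * EE k" for k
    unfolding ER_def ET_def EE_def by (rule int2) (use pwRT in auto)
  define t0 where "t0 = (norm (Rtrue \<alpha> h gradf xz))\<^sup>2"
  have ET0: "ET 0 = ennreal t0"
  proof -
    have "ET 0 = (\<integral>\<^sup>+\<omega>. ennreal t0 \<partial>M)" unfolding ET_def T_def t0_def
      by (rule nn_integral_cong) (use xz in simp)
    then show ?thesis by (simp add: P.emeasure_space_1)
  qed
  have EE0: "EE 0 < \<infinity>"
  proof -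
    have "EE 0 \<le> ennreal (\<eta>\<^sup>2 / (2 - \<eta>\<^sup>2) + 1) * ennreal t0 + ennreal (2 * (\<iota>I\<^sup>2 * (\<delta> 0)\<^sup>2) / (2 - \<eta>\<^sup>2))"
      using ab(1)[of 0] ET0 by simp
    also have "\<dots> < \<infinity>" by (simp add: ennreal_mult_less_top ennreal_add_less_top)
    finally show ?thesis .
  qed
  define q where "q = prox \<alpha> h (xz - \<alpha> *\<^sub>R gradf xz)"
  define K0 where "K0 = norm (xz - \<alpha> *\<^sub>R gradf xz - q) + \<alpha> * norm (gradf q) + 2 * \<alpha> + L * \<alpha>\<^sup>2"
  define Q0 where "Q0 = f q + real_of_ereal (h q) - m + K0"
  have K00: "0 \<le> K0" unfolding K0_def using a(1) L0 by simp
  have Q00: "0 \<le> Q0" unfolding Q0_def using m[OF prox_fin[OF H a(1)], of "xz - \<alpha> *\<^sub>R gradf xz"] K00 q_def by simp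
  have EP1: "EP 1 < \<infinity>"
  proof -
    have "EP 1 \<le> (\<integral>\<^sup>+\<omega>. ennreal Q0 + ennreal K0 * ennreal ((norm (e 0 \<omega>))\<^sup>2) \<partial>M)"
      unfolding EP_def
    proof (rule nn_integral_mono)
      fix \<omega> assume \<omega>: "\<omega> \<in> space M"
      have xe: "x 1 \<omega> = prox \<alpha> h (xz - \<alpha> *\<^sub>R g 0 \<omega>)" using xs xz \<omega> by simp
      have e0: "e 0 \<omega> = g 0 \<omega> - gradf xz" unfolding e_def using xz \<omega> by simp
      have "\<psi> 1 \<omega> \<le> Q0 + K0 * (norm (e 0 \<omega>))\<^sup>2"
        using step0[OF A a(1), of xz "g 0 \<omega>"] unfolding \<psi>_def xe e0 Q0_def K0_def q_def[symmetric]
        by (simp add: algebra_simps)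
      then have "ennreal (\<psi> 1 \<omega>) \<le> ennreal (Q0 + K0 * (norm (e 0 \<omega>))\<^sup>2)" by (rule ennreal_leI)
      also have "\<dots> = ennreal Q0 + ennreal K0 * ennreal ((norm (e 0 \<omega>))\<^sup>2)"
        using Q00 K00 by (intro enn_lin) auto
      finally show "ennreal (\<psi> 1 \<omega>) \<le> ennreal Q0 + ennreal K0 * ennreal ((norm (e 0 \<omega>))\<^sup>2)" .
    qed
    also have "\<dots> = ennreal Q0 + ennreal K0 * EE 0"
      unfolding EE_def by (simp add: nn_integral_add nn_integral_cmult P.emeasure_space_1)
    also have "\<dots> < \<infinity>" using EE0 by (simp add: ennreal_mult_less_top ennreal_add_less_top)
    finally show ?thesis .
  qed
  have fromP: "ET (Suc n) < \<infinity> \<and> EE (Suc n) < \<infinity> \<and> ER (Suc n) < \<infinity>" if "EP (Suc n) < \<infinity>" for n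
  proof -
    have t1: "ennreal (4 / \<alpha>) * EP (Suc n) < \<infinity>" using that by (simp add: ennreal_mult_less_top)
    have t: "ET (Suc n) < \<infinity>" using dT[of n] t1 by (rule le_less_trans)
    have ee1: "ennreal (\<eta>\<^sup>2 / (2 - \<eta>\<^sup>2) + 1) * ET (Suc n) + ennreal (2 * (\<iota>I\<^sup>2 * (\<delta> (Suc n))\<^sup>2) / (2 - \<eta>\<^sup>2)) < \<infinity>"
      using t by (simp add: ennreal_mult_less_top ennreal_add_less_top)
    have ee: "EE (Suc n) < \<infinity>" using ab(1)[of "Suc n"] ee1 by (rule le_less_trans)
    have rr1: "2 * ET (Suc n) + 2 * EE (Suc n) < \<infinity>" using t ee by (simp add: ennreal_mult_less_top ennreal_add_less_top)
    have "ER (Suc n) < \<infinity>" using dR[of "Suc n"] rr1 by (rule le_less_trans)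
    then show ?thesis using t ee by simp
  qed
  have finP: "EP (Suc n) < \<infinity>" for n
  proof (induction n)
    case 0 then show ?case using EP1 by simp
  next
    case (Suc n)
    have "EP (Suc (Suc n)) \<le> EP (Suc (Suc n)) + ennreal (\<alpha> / 4) * ER (Suc n)" by simp
    also have "\<dots> \<le> EP (Suc n) + ennreal \<alpha> * EE (Suc n)" by (rule dc)
    also have "\<dots> < \<infinity>" using Suc fromP[OF Suc] by (simp add: ennreal_mult_less_top ennreal_add_less_top)
    finally show ?case .
  qed
  define rP where "rP = (\<lambda>k. enn2real (EP k))"
  define rE where "rE = (\<lambda>k. enn2real (EE k))"
  define rR where "rR = (\<lambda>k. enn2real (ER k))"
  define rT where "rT = (\<lambda>k. enn2real (ET k))"
  have eqs: "EP (Suc n) = ennreal (rP (Suc n))" "EE (Suc n) = ennreal (rE (Suc n))"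
     "ER (Suc n) = ennreal (rR (Suc n))" "ET (Suc n) = ennreal (rT (Suc n))" for n
    unfolding rP_def rE_def rR_def rT_def using finP[of n] fromP[OF finP[of n]]
    by (simp_all add: ennreal_enn2real)
  have nn: "0 \<le> rP k" "0 \<le> rE k" "0 \<le> rR k" "0 \<le> rT k" for k
    unfolding rP_def rE_def rR_def rT_def by auto
  have c': "rP (Suc (Suc n)) + \<alpha> / 4 * rR (Suc n) \<le> rP (Suc n) + \<alpha> * rE (Suc n)" for n
    by (rule H1[OF dc[of n, unfolded eqs]]) (use nn a(1) in auto)
  have b': "rE (Suc n) \<le> \<eta>\<^sup>2 / 4 * rR (Suc n) + \<iota>I\<^sup>2 * (\<delta> n')\<^sup>2" if "n' = Suc n" for n n'
    using H2[OF ab(2)[of "Suc n", unfolded eqs]] nn that by simp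
  have f': "rT (Suc n) \<le> 2 * rR (Suc n) + 2 * rE (Suc n)" for n
    by (rule H3[OF dT2[of "Suc n", unfolded eqs]]) (use nn in auto)
  define cc where "cc = \<alpha> / 4 * (1 - \<eta>\<^sup>2)"
  have e2: "\<eta>\<^sup>2 < 1" using eta by (simp add: power_less_one_iff abs_less_iff)
  have cc0: "cc > 0" unfolding cc_def using a(1) e2 by simp
  have step: "rP (Suc (Suc n)) + cc * rR (Suc n) \<le> rP (Suc n) + \<alpha> * (\<iota>I\<^sup>2 * (\<delta> (Suc n))\<^sup>2)" for n
  proof -
    have b: "rE (Suc n) \<le> \<eta>\<^sup>2 / 4 * rR (Suc n) + \<iota>I\<^sup>2 * (\<delta> (Suc n))\<^sup>2" by (rule b') simp
    have "\<alpha> * rE (Suc n) \<le> \<alpha> * (\<eta>\<^sup>2 / 4 * rR (Suc n) + \<iota>I\<^sup>2 * (\<delta> (Suc n))\<^sup>2)"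
      using b a(1) by (intro mult_left_mono) auto
    moreover have "\<alpha> * (\<eta>\<^sup>2 / 4 * rR (Suc n) + \<iota>I\<^sup>2 * (\<delta> (Suc n))\<^sup>2)
        = \<alpha> * \<eta>\<^sup>2 / 4 * rR (Suc n) + \<alpha> * (\<iota>I\<^sup>2 * (\<delta> (Suc n))\<^sup>2)" by (simp add: algebra_simps)
    moreover have "cc * rR (Suc n) = \<alpha> / 4 * rR (Suc n) - \<alpha> * \<eta>\<^sup>2 / 4 * rR (Suc n)"
      unfolding cc_def by (simp add: algebra_simps)
    ultimately show ?thesis using c'[of n] by linarith
  qed
  have tel: "rP (Suc n) + cc * (\<Sum>j<n. rR (Suc j)) \<le> rP 1 + \<alpha> * \<iota>I\<^sup>2 * (\<Sum>j<n. (\<delta> (Suc j))\<^sup>2)" for n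
  proof (induction n)
    case 0 then show ?case by simp
  next
    case (Suc n)
    then show ?case using step[of n] by (simp add: algebra_simps)
  qed
  define S where "S = (\<Sum>k. (\<delta> k)\<^sup>2)"
  have dS: "(\<Sum>j<n. (\<delta> (Suc j))\<^sup>2) \<le> S" for n
  proof -
    have "(\<Sum>k<Suc n. (\<delta> k)\<^sup>2) = (\<delta> 0)\<^sup>2 + (\<Sum>j<n. (\<delta> (Suc j))\<^sup>2)"
      by (rule sum.lessThan_Suc_shift)
    then have "(\<Sum>j<n. (\<delta> (Suc j))\<^sup>2) \<le> (\<Sum>k<Suc n. (\<delta> k)\<^sup>2)" by simp
    also have "\<dots> \<le> S" unfolding S_def by (rule sum_le_suminf[OF sm]) auto
    finally show ?thesis .
  qed
  define BR where "BR = (rP 1 + \<alpha> * \<iota>I\<^sup>2 * S) / cc"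
  have RB: "(\<Sum>j<n. rR (Suc j)) \<le> BR" for n
  proof -
    have "\<alpha> * \<iota>I\<^sup>2 * (\<Sum>j<n. (\<delta> (Suc j))\<^sup>2) \<le> \<alpha> * \<iota>I\<^sup>2 * S"
      using dS[of n] a(1) by (intro mult_left_mono) auto
    then have "cc * (\<Sum>j<n. rR (Suc j)) \<le> rP 1 + \<alpha> * \<iota>I\<^sup>2 * S" using tel[of n] nn(1)[of "Suc n"] by linarith
    then show ?thesis unfolding BR_def using cc0 by (simp add: pos_le_divide_eq mult.commute)
  qed
  have Tb3: "rT (Suc j) \<le> 3 * rR (Suc j) + 2 * \<iota>I\<^sup>2 * (\<delta> (Suc j))\<^sup>2" for j
  proof -
    have b: "rE (Suc j) \<le> \<eta>\<^sup>2 / 4 * rR (Suc j) + \<iota>I\<^sup>2 * (\<delta> (Suc j))\<^sup>2" by (rule b') simp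
    have "\<eta>\<^sup>2 / 4 * rR (Suc j) \<le> 1 / 4 * rR (Suc j)" using e2 nn(3)[of "Suc j"] by (intro mult_right_mono) auto
    moreover have "2 * \<iota>I\<^sup>2 * (\<delta> (Suc j))\<^sup>2 = 2 * (\<iota>I\<^sup>2 * (\<delta> (Suc j))\<^sup>2)" by simp
    ultimately show ?thesis using f'[of j] b nn(3)[of "Suc j"] by linarith
  qed
  define C where "C = t0 + 3 * BR + 2 * \<iota>I\<^sup>2 * S"
  have S0: "0 \<le> S" unfolding S_def using sm by (intro suminf_nonneg) auto
  have C0: "0 \<le> C"
  proof -
    have "0 \<le> (\<Sum>j<0. rR (Suc j))" by simp
    then have "0 \<le> BR" using RB[of 0] by simp
    then show ?thesis unfolding C_def t0_def using S0 by simp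
  qed
  show ?thesis
  proof (intro exI allI impI)
    fix K :: nat assume K: "K \<ge> 1"
    then obtain n where n: "K = Suc n" by (cases K) auto
    have "(\<Sum>k<K. ET k) = ET 0 + (\<Sum>j<n. ET (Suc j))" unfolding n by (rule sum.lessThan_Suc_shift)
    also have "\<dots> = ennreal t0 + (\<Sum>j<n. ennreal (rT (Suc j)))" using ET0 eqs(4) by simp
    also have "\<dots> = ennreal (t0 + (\<Sum>j<n. rT (Suc j)))"
      using nn(4) unfolding t0_def by (simp add: sum_ennreal ennreal_plus sum_nonneg)
    also have "\<dots> \<le> ennreal C"
    proof (rule ennreal_leI)
      have "(\<Sum>j<n. rT (Suc j)) \<le> (\<Sum>j<n. 3 * rR (Suc j) + 2 * \<iota>I\<^sup>2 * (\<delta> (Suc j))\<^sup>2)"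
        by (intro sum_mono Tb3)
      also have "\<dots> = 3 * (\<Sum>j<n. rR (Suc j)) + 2 * \<iota>I\<^sup>2 * (\<Sum>j<n. (\<delta> (Suc j))\<^sup>2)"
        by (simp add: sum.distrib sum_distrib_left)
      also have "\<dots> \<le> 3 * BR + 2 * \<iota>I\<^sup>2 * S"
        using RB[of n] dS[of n] by (intro add_mono mult_left_mono) auto
      finally show "t0 + (\<Sum>j<n. rT (Suc j)) \<le> C" unfolding C_def by simp
    qed
    finally have "(\<Sum>k<K. ET k) \<le> ennreal C" .
    then show "Min ((\<lambda>k. \<integral>\<^sup>+\<omega>. ennreal ((norm (Rtrue \<alpha> h gradf (x k \<omega>)))\<^sup>2) \<partial>M) ` {..<K}) \<le> ennreal (C / real K)"
      using ennreal_min_avg[OF K C0, of ET] unfolding ET_def T_def by simp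
  qed
qed


theorem mainTheorem6:
  fixes f :: "'a::euclidean_space \<Rightarrow> real" and gradf :: "'a \<Rightarrow> 'a"
    and h :: "'a \<Rightarrow> ereal" and L :: real
  assumes A: "assumptionA f gradf h L"
  shows
  \<comment> \<open>(1) finite-sum setting, Option I\<close>
  "(\<forall>(F :: 'a \<Rightarrow> 'b \<Rightarrow> real) (S :: 'b list) (g :: nat \<Rightarrow> 'a) (x :: nat \<Rightarrow> 'a)
       (x0 :: 'a) (\<eta> :: real) (\<iota>0 :: real) (\<delta> :: nat \<Rightarrow> real) (\<alpha> :: real).
      S \<noteq> [] \<and> (\<forall>y. f y = (\<Sum>i<length S. F y (S ! i)) / real (length S)) \<and>
      x 0 = x0 \<and> (\<forall>k. x (Suc k) = prox \<alpha> h (x k - \<alpha> *\<^sub>R g k)) \<and>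
      0 \<le> \<eta> \<and> \<eta> < 1 \<and> 0 \<le> \<iota>0 \<and> \<iota>0 < sqrt ((1 - \<eta>) / 2) \<and>
      (\<forall>k. 0 \<le> \<delta> k) \<and> summable (\<lambda>k. (\<delta> k)\<^sup>2) \<and>
      0 < \<alpha> \<and> \<alpha> \<le> (1 - \<eta>) / (2 * L) \<and>
      (\<forall>k. norm (g k - gradf (x k))
             \<le> \<eta> / 2 * norm ((1 / \<alpha>) *\<^sub>R (x k - x (Suc k))) + \<iota>0 * \<delta> k)
      \<longrightarrow> (\<exists>C::real. \<forall>K::nat. K \<ge> 1 \<longrightarrow>
              Min ((\<lambda>k. (norm (Rtrue \<alpha> h gradf (x k)))\<^sup>2) ` {..<K}) \<le> C / real K))
   \<and>
  \<comment> \<open>(2) expectation setting, Option I\<close>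
  (\<forall>(M :: 'w measure) (P :: 'c measure) (F :: 'a \<Rightarrow> 'c \<Rightarrow> real)
       (g :: nat \<Rightarrow> 'w \<Rightarrow> 'a) (x :: nat \<Rightarrow> 'w \<Rightarrow> 'a)
       (x0 :: 'a) (\<eta> :: real) (\<iota>0 :: real) (\<delta> :: nat \<Rightarrow> real) (\<alpha> :: real).
      prob_space M \<and> prob_space P \<and>
      (\<forall>y. integrable P (F y) \<and> f y = (\<integral>\<xi>. F y \<xi> \<partial>P)) \<and>
      (\<forall>k. g k \<in> borel_measurable M) \<and>
      (\<forall>\<omega>\<in>space M. x 0 \<omega> = x0) \<and>
      (\<forall>k. \<forall>\<omega>\<in>space M. x (Suc k) \<omega> = prox \<alpha> h (x k \<omega> - \<alpha> *\<^sub>R g k \<omega>)) \<and>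
      (\<forall>k. integrable M (x k)) \<and>
      0 \<le> \<eta> \<and> \<eta> < 1 \<and> 0 \<le> \<iota>0 \<and> \<iota>0 < sqrt ((1 - \<eta>) / 2) \<and>
      (\<forall>k. 0 \<le> \<delta> k) \<and> summable (\<lambda>k. (\<delta> k)\<^sup>2) \<and>
      0 < \<alpha> \<and> \<alpha> \<le> (1 - \<eta>) / (2 * L) \<and>
      (\<forall>k. AE \<omega> in M.
          nn_cond_exp M (gen_sigma M g k) (\<lambda>\<omega>. ennreal ((norm (g k \<omega> - gradf (x k \<omega>)))\<^sup>2)) \<omega>
          \<le> ennreal (\<eta>\<^sup>2 / 4 * (norm (vec_cond_exp M (gen_sigma M g k)
                          (\<lambda>\<omega>. (1 / \<alpha>) *\<^sub>R (x k \<omega> - x (Suc k) \<omega>)) \<omega>))\<^sup>2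
                     + \<iota>0\<^sup>2 * (\<delta> k)\<^sup>2))
      \<longrightarrow> (\<exists>C::real. \<forall>K::nat. K \<ge> 1 \<longrightarrow>
              Min ((\<lambda>k. \<integral>\<^sup>+\<omega>. ennreal ((norm (Rtrue \<alpha> h gradf (x k \<omega>)))\<^sup>2) \<partial>M) ` {..<K})
                \<le> ennreal (C / real K)))"
proof (intro conjI allI impI)
  fix F :: "'a \<Rightarrow> 'b \<Rightarrow> real" and S :: "'b list" and g :: "nat \<Rightarrow> 'a" and x :: "nat \<Rightarrow> 'a"
    and x0 :: 'a and \<eta> \<iota>0 :: real and \<delta> :: "nat \<Rightarrow> real" and \<alpha> :: real
  assume asm: "S \<noteq> [] \<and> (\<forall>y. f y = (\<Sum>i<length S. F y (S ! i)) / real (length S)) \<and>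
      x 0 = x0 \<and> (\<forall>k. x (Suc k) = prox \<alpha> h (x k - \<alpha> *\<^sub>R g k)) \<and>
      0 \<le> \<eta> \<and> \<eta> < 1 \<and> 0 \<le> \<iota>0 \<and> \<iota>0 < sqrt ((1 - \<eta>) / 2) \<and>
      (\<forall>k. 0 \<le> \<delta> k) \<and> summable (\<lambda>k. (\<delta> k)\<^sup>2) \<and>
      0 < \<alpha> \<and> \<alpha> \<le> (1 - \<eta>) / (2 * L) \<and>
      (\<forall>k. norm (g k - gradf (x k))
             \<le> \<eta> / 2 * norm ((1 / \<alpha>) *\<^sub>R (x k - x (Suc k))) + \<iota>0 * \<delta> k)"
  show "\<exists>C::real. \<forall>K::nat. K \<ge> 1 \<longrightarrow>
              Min ((\<lambda>k. (norm (Rtrue \<alpha> h gradf (x k)))\<^sup>2) ` {..<K}) \<le> C / real K"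
    by (rule part1[OF A, where x=x and g=g and \<alpha>=\<alpha> and \<eta>=\<eta> and \<iota>I=\<iota>0 and \<delta>=\<delta>]) (use asm in auto)
next
  fix M :: "'w measure" and P :: "'c measure" and F :: "'a \<Rightarrow> 'c \<Rightarrow> real"
    and g :: "nat \<Rightarrow> 'w \<Rightarrow> 'a" and x :: "nat \<Rightarrow> 'w \<Rightarrow> 'a"
    and x0 :: 'a and \<eta> \<iota>0 :: real and \<delta> :: "nat \<Rightarrow> real" and \<alpha> :: real
  assume asm: "prob_space M \<and> prob_space P \<and>
      (\<forall>y. integrable P (F y) \<and> f y = (\<integral>\<xi>. F y \<xi> \<partial>P)) \<and>
      (\<forall>k. g k \<in> borel_measurable M) \<and>
      (\<forall>\<omega>\<in>space M. x 0 \<omega> = x0) \<and>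
      (\<forall>k. \<forall>\<omega>\<in>space M. x (Suc k) \<omega> = prox \<alpha> h (x k \<omega> - \<alpha> *\<^sub>R g k \<omega>)) \<and>
      (\<forall>k. integrable M (x k)) \<and>
      0 \<le> \<eta> \<and> \<eta> < 1 \<and> 0 \<le> \<iota>0 \<and> \<iota>0 < sqrt ((1 - \<eta>) / 2) \<and>
      (\<forall>k. 0 \<le> \<delta> k) \<and> summable (\<lambda>k. (\<delta> k)\<^sup>2) \<and>
      0 < \<alpha> \<and> \<alpha> \<le> (1 - \<eta>) / (2 * L) \<and>
      (\<forall>k. AE \<omega> in M.
          nn_cond_exp M (gen_sigma M g k) (\<lambda>\<omega>. ennreal ((norm (g k \<omega> - gradf (x k \<omega>)))\<^sup>2)) \<omega>
          \<le> ennreal (\<eta>\<^sup>2 / 4 * (norm (vec_cond_exp M (gen_sigma M g k)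
                          (\<lambda>\<omega>. (1 / \<alpha>) *\<^sub>R (x k \<omega> - x (Suc k) \<omega>)) \<omega>))\<^sup>2
                     + \<iota>0\<^sup>2 * (\<delta> k)\<^sup>2))"
  show "\<exists>C::real. \<forall>K::nat. K \<ge> 1 \<longrightarrow>
              Min ((\<lambda>k. \<integral>\<^sup>+\<omega>. ennreal ((norm (Rtrue \<alpha> h gradf (x k \<omega>)))\<^sup>2) \<partial>M) ` {..<K})
                \<le> ennreal (C / real K)"
    by (rule part2[OF A, where M=M and x=x and g=g and xz=x0 and \<alpha>=\<alpha> and \<eta>=\<eta> and \<iota>I=\<iota>0 and \<delta>=\<delta>]) (use asm in auto)
qed

end
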